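(* Let $\lambda=\lambda(n)=\Theta(\log n)$ with $\lambda\in[1..n]$ and $k=k(n)=\Theta(\lambda\log n)$ a positive integer. Consider the online algorithm selection procedure that maximizes $\mathrm{OneMax}$ on $\{0,1\}^n$ by starting from a uniformly random search point and running the $(1+1)$ EA until, for the first time, $k$ consecutive iterations of the $(1+1)$ EA fail to create an offspring strictly better than the current individual; at that moment it switches (irrevocably) to the $(1+(\lambda,\lambda))$ GA with population size $\lambda$, initialized with the current individual, and runs it until the optimum is found. Then the expected number of fitness evaluations until the optimum $1^n$ is found is $O(n\log\log n)$.
   Context: $\mathrm{OneMax}(x)=\sum_{i=1}^n x_i$, optimum $1^n$. The $(1+1)$ EA keeps one individual $x$; each iteration creates one offspring by flipping each bit independently with probability $1/n$ and replaces $x$ by it if its fitness is at least $f(x)$; cost 1 evaluation. The $(1+(\lambda,\lambda))$ GA with parameter $\lambda\in[1..n]$ keeps one individual $x$; each iteration: sample $\ell\sim\mathrm{Bin}(n,\lambda/n)$, create $\lambda$ offspring each by flipping exactly $\ell$ uniformly random distinct positions of $x$, let $x'$ be a best one (ties uniformly at random); then create $\lambda$ offspring each taking independently per position the bit of $x'$ with probability $1/\lambda$ and of $x$ otherwise; let $y$ be a best one; set $x\gets y$ if $f(y)\ge f(x)$. Cost $2\lambda$ evaluations per iteration. *)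

theory Defs
  imports "HOL-Probability.Probability" "HOL-Library.Landau_Symbols"
begin

(* A search point x in {0,1}^n is represented by the set of positions i < n with x_i = 1.
   OneMax(x) = number of one-bits; the optimum 1^n is {..<n}. *)

definition onemax :: "nat set \<Rightarrow> nat" where
  "onemax x = card x"

definition flip :: "nat set \<Rightarrow> nat set \<Rightarrow> nat set" where
  "flip x F = (x - F) \<union> (F - x)"

definition ea_mutation :: "nat \<Rightarrow> nat set \<Rightarrow> nat set pmf" where
  "ea_mutation n x =
     map_pmf (\<lambda>b. flip x {i. i < n \<and> b i})
       (Pi_pmf {..<n} False (\<lambda>_. bernoulli_pmf (1 / real n)))"

definition best_of :: "nat \<Rightarrow> (nat \<Rightarrow> nat set) \<Rightarrow> nat set pmf" where
  "best_of lam off =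
     (let M = Max ((\<lambda>j. onemax (off j)) ` {..<lam})
      in map_pmf off (pmf_of_set {j. j < lam \<and> onemax (off j) = M}))"

definition ga_iteration :: "nat \<Rightarrow> nat \<Rightarrow> nat set \<Rightarrow> nat set pmf" where
  "ga_iteration n lam x =
     bind_pmf (binomial_pmf n (real lam / real n)) (\<lambda>l.
     bind_pmf (Pi_pmf {..<lam} {}
                 (\<lambda>_. map_pmf (flip x) (pmf_of_set {F. F \<subseteq> {..<n} \<and> card F = l}))) (\<lambda>offs.
     bind_pmf (best_of lam offs) (\<lambda>x'.
     bind_pmf (Pi_pmf ({..<lam} \<times> {..<n}) False (\<lambda>_. bernoulli_pmf (1 / real lam))) (\<lambda>cs.
     bind_pmf (best_of lam (\<lambda>j. {i. i < n \<and> (if cs (j, i) then i \<in> x' else i \<in> x)})) (\<lambda>y.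
     return_pmf (if onemax y \<ge> onemax x then y else x))))))"

(* state of the combined algorithm: (1+1) EA with current individual and the number of
   consecutive non-improving iterations so far, or the (1+(lambda,lambda)) GA *)
datatype state = EA "nat set" nat | GA "nat set"

fun cur :: "state \<Rightarrow> nat set" where
  "cur (EA x c) = x"
| "cur (GA x) = x"

definition ea_step :: "nat \<Rightarrow> nat \<Rightarrow> nat set \<Rightarrow> nat \<Rightarrow> state pmf" where
  "ea_step n k x c =
     map_pmf (\<lambda>y.
        if onemax y > onemax x then EA y 0
        else (let x' = (if onemax y \<ge> onemax x then y else x)
              in if Suc c \<ge> k then GA x' else EA x' (Suc c)))
       (ea_mutation n x)"

(* one iteration; the optimum is absorbing (the run has stopped) *)
definition step :: "nat \<Rightarrow> nat \<Rightarrow> nat \<Rightarrow> state \<Rightarrow> state pmf" where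
  "step n lam k s =
     (if cur s = {..<n} then return_pmf s
      else (case s of EA x c \<Rightarrow> ea_step n k x c
                    | GA x \<Rightarrow> map_pmf GA (ga_iteration n lam x)))"

definition cost :: "nat \<Rightarrow> nat \<Rightarrow> state \<Rightarrow> nat" where
  "cost n lam s =
     (if cur s = {..<n} then 0
      else (case s of EA _ _ \<Rightarrow> 1 | GA _ \<Rightarrow> 2 * lam))"

definition init :: "nat \<Rightarrow> state pmf" where
  "init n = map_pmf (\<lambda>x. EA x 0) (pmf_of_set (Pow {..<n}))"

primrec dist :: "nat \<Rightarrow> nat \<Rightarrow> nat \<Rightarrow> nat \<Rightarrow> state pmf" where
  "dist n lam k 0 = init n"
| "dist n lam k (Suc t) = bind_pmf (dist n lam k t) (step n lam k)"

(* expected number of fitness evaluations until the optimum is found: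
   1 for evaluating the initial point, plus the expected cost of all iterations *)
definition expected_evals :: "nat \<Rightarrow> nat \<Rightarrow> nat \<Rightarrow> ennreal" where
  "expected_evals n lam k =
     1 + (\<Sum>t. \<integral>\<^sup>+ s. ennreal (real (cost n lam s)) \<partial>measure_pmf (dist n lam k t))"

end

theory Submission
  imports Defs "HOL-Real_Asymp.Real_Asymp"
begin

lemma drift:
  fixes \<Phi> :: "state \<Rightarrow> ennreal" and S :: "state set"
  assumes inv: "\<And>s. s \<in> S \<Longrightarrow> set_pmf (step n L k s) \<subseteq> S"
  and ini: "set_pmf (init n) \<subseteq> S"
  and dr: "\<And>s. s \<in> S \<Longrightarrow> ennreal (real (cost n L s)) + (\<integral>\<^sup>+ s'. \<Phi> s' \<partial>measure_pmf (step n L k s)) \<le> \<Phi> s"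
  shows "(\<Sum>t. \<integral>\<^sup>+ s. ennreal (real (cost n L s)) \<partial>measure_pmf (dist n L k t)) \<le> (\<integral>\<^sup>+ s. \<Phi> s \<partial>measure_pmf (init n))"
proof -
  have supp: "set_pmf (dist n L k t) \<subseteq> S" for t
    by (induction t) (use ini inv in auto)
  have key: "(\<Sum>t<T. \<integral>\<^sup>+ s. ennreal (real (cost n L s)) \<partial>measure_pmf (dist n L k t))
      + (\<integral>\<^sup>+ s. \<Phi> s \<partial>measure_pmf (dist n L k T)) \<le> (\<integral>\<^sup>+ s. \<Phi> s \<partial>measure_pmf (init n))" for T
  proof (induction T)
    case 0 then show ?case by simp
  next
    case (Suc T)
    have "(\<integral>\<^sup>+ s. \<Phi> s \<partial>measure_pmf (dist n L k (Suc T))) =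
          (\<integral>\<^sup>+ s. (\<integral>\<^sup>+ s'. \<Phi> s' \<partial>measure_pmf (step n L k s)) \<partial>measure_pmf (dist n L k T))"
      by (simp add: nn_integral_bind_pmf)
    hence "(\<integral>\<^sup>+ s. ennreal (real (cost n L s)) \<partial>measure_pmf (dist n L k T)) + (\<integral>\<^sup>+ s. \<Phi> s \<partial>measure_pmf (dist n L k (Suc T)))
        = (\<integral>\<^sup>+ s. ennreal (real (cost n L s)) + (\<integral>\<^sup>+ s'. \<Phi> s' \<partial>measure_pmf (step n L k s)) \<partial>measure_pmf (dist n L k T))"
      by (simp add: nn_integral_add)
    also have "\<dots> \<le> (\<integral>\<^sup>+ s. \<Phi> s \<partial>measure_pmf (dist n L k T))"
      by (intro nn_integral_mono_AE) (use supp dr in \<open>auto simp: AE_measure_pmf_iff\<close>)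
    finally have "(\<Sum>t<T. \<integral>\<^sup>+ s. ennreal (real (cost n L s)) \<partial>measure_pmf (dist n L k t)) + ((\<integral>\<^sup>+ s. ennreal (real (cost n L s)) \<partial>measure_pmf (dist n L k T)) + (\<integral>\<^sup>+ s. \<Phi> s \<partial>measure_pmf (dist n L k (Suc T))))
       \<le> (\<Sum>t<T. \<integral>\<^sup>+ s. ennreal (real (cost n L s)) \<partial>measure_pmf (dist n L k t)) + (\<integral>\<^sup>+ s. \<Phi> s \<partial>measure_pmf (dist n L k T))"
      by (rule add_left_mono)
    then have "(\<Sum>t<Suc T. \<integral>\<^sup>+ s. ennreal (real (cost n L s)) \<partial>measure_pmf (dist n L k t)) + (\<integral>\<^sup>+ s. \<Phi> s \<partial>measure_pmf (dist n L k (Suc T)))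
       \<le> (\<Sum>t<T. \<integral>\<^sup>+ s. ennreal (real (cost n L s)) \<partial>measure_pmf (dist n L k t)) + (\<integral>\<^sup>+ s. \<Phi> s \<partial>measure_pmf (dist n L k T))"
      by (simp only: sum.lessThan_Suc add.assoc)
    then show ?case using Suc.IH by (rule order_trans)
  qed
  show ?thesis
    unfolding suminf_eq_SUP
  proof (intro SUP_least)
    fix T
    show "(\<Sum>t<T. \<integral>\<^sup>+ s. ennreal (real (cost n L s)) \<partial>measure_pmf (dist n L k t)) \<le> (\<integral>\<^sup>+ s. \<Phi> s \<partial>measure_pmf (init n))"
      using key[of T] by (rule order_trans[rotated]) simp
  qed
qed

lemma two_valued:
  fixes M :: "'a pmf" and f :: "'a \<Rightarrow> ennreal"
  assumes le: "\<And>x. x \<in> set_pmf M \<Longrightarrow> f x \<le> ennreal (if P x then A else B)"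
    and A: "0 \<le> A" and B: "0 \<le> B"
  shows "(\<integral>\<^sup>+x. f x \<partial>measure_pmf M) \<le> ennreal (A * measure_pmf.prob M {x. P x} + B * (1 - measure_pmf.prob M {x. P x}))"
proof -
  have "(\<integral>\<^sup>+x. f x \<partial>measure_pmf M) \<le> (\<integral>\<^sup>+x. ennreal (B + (A - B) * indicator {x. P x} x) \<partial>measure_pmf M)"
    by (intro nn_integral_mono_AE) (use le in \<open>fastforce simp: AE_measure_pmf_iff indicator_def\<close>)
  also have "\<dots> = ennreal (\<integral>x. B + (A - B) * indicator {x. P x} x \<partial>measure_pmf M)"
  proof (rule nn_integral_eq_integral)
    show "integrable (measure_pmf M) (\<lambda>x. B + (A - B) * indicator {x. P x} x)"
      by (rule measure_pmf.integrable_const_bound[where B="\<bar>A\<bar> + 2 * \<bar>B\<bar>"]) (auto simp: indicator_def)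
  qed (use A B in \<open>auto simp: indicator_def\<close>)
  also have "(\<integral>x. B + (A - B) * indicator {x. P x} x \<partial>measure_pmf M) = B + (A - B) * measure_pmf.prob M {x. P x}"
  proof -
    have i1: "integrable (measure_pmf M) (\<lambda>x. (A - B) * indicator {x. P x} x :: real)"
      by (intro integrable_mult_right integrable_real_indicator) (auto simp: measure_pmf.emeasure_eq_measure)
    have "(\<integral>x. B + (A - B) * indicator {x. P x} x \<partial>measure_pmf M) = (\<integral>x. B \<partial>measure_pmf M) + (\<integral>x. (A - B) * indicator {x. P x} x \<partial>measure_pmf M)"
      by (rule Bochner_Integration.integral_add[OF _ i1]) simp
    then show ?thesis by simp
  qed
  also have "B + (A - B) * measure_pmf.prob M {x. P x} = A * measure_pmf.prob M {x. P x} + B * (1 - measure_pmf.prob M {x. P x})"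
    by (simp add: algebra_simps)
  finally show ?thesis .
qed

lemma one_minus_inv_pow_ge:
  assumes "n \<ge> (1::nat)"
  shows "(1 - 1 / real n) ^ (n - 1) \<ge> exp (-1)"
proof (cases "n = 1")
  case True then show ?thesis by simp
next
  case False
  define m where "m = n - 1"
  have m: "m \<ge> 1" "n = m + 1" using assms False by (auto simp: m_def)
  have "(1 + 1 / real m) ^ m \<le> exp (1 / real m) ^ m"
    using exp_ge_add_one_self[of "1 / real m"] by (intro power_mono) (auto simp: add.commute)
  also have "\<dots> = exp 1" using m by (simp add: exp_of_nat_mult[symmetric])
  finally have h: "(1 + 1 / real m) ^ m \<le> exp 1" .
  have eq: "1 - 1 / real n = inverse (1 + 1 / real m)" using m by (simp add: field_simps)
  have "(1 - 1 / real n) ^ (n - 1) = inverse ((1 + 1 / real m) ^ m)"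
    by (simp only: eq m_def[symmetric] power_inverse)
  also have "\<dots> \<ge> inverse (exp 1)"
    using h by (intro le_imp_inverse_le) (auto intro!: zero_less_power add_pos_nonneg)
  finally show ?thesis by (simp add: exp_minus)
qed

lemma onemax_flip_single:
  assumes "finite x" "z \<notin> x"
  shows "onemax (flip x {z}) = onemax x + 1"
proof -
  have "flip x {z} = insert z x" using assms by (auto simp: flip_def)
  then show ?thesis using assms by (simp add: onemax_def)
qed

lemma ea_improve:
  assumes x: "x \<subseteq> {..<n}" and n: "n \<ge> 1"
  shows "measure_pmf.prob (ea_mutation n x) {y. onemax x < onemax y} \<ge> real (n - card x) / (exp 1 * real n)"
proof -
  define P where "P = Pi_pmf {..<n} False (\<lambda>_. bernoulli_pmf (1 / real n))"
  define Z where "Z = {..<n} - x"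
  define Az where "Az z = Pi {..<n} (\<lambda>i. if i = z then {True} else {False})" for z
  have fx: "finite x" using x finite_subset by blast
  have sub: "(\<Union>z\<in>Z. Az z) \<subseteq> (\<lambda>b. flip x {i. i < n \<and> b i}) -` {y. onemax x < onemax y}"
  proof
    fix b assume "b \<in> (\<Union>z\<in>Z. Az z)"
    then obtain z where z: "z \<in> Z" "b \<in> Az z" by blast
    have "{i. i < n \<and> b i} = {z}" using z by (auto simp: Az_def Z_def Pi_def split: if_splits)
    then show "b \<in> (\<lambda>b. flip x {i. i < n \<and> b i}) -` {y. onemax x < onemax y}"
      using onemax_flip_single[OF fx, of z] z(1) by (simp add: Z_def)
  qed
  have p01: "1 / real n \<le> 1" using n by simp
  have meas: "measure_pmf.prob P (Az z) = (1 / real n) * (1 - 1 / real n) ^ (n - 1)" if z: "z < n" for z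
  proof -
    have "measure_pmf.prob P (Az z) = (\<Prod>i\<in>{..<n}. measure_pmf.prob (bernoulli_pmf (1 / real n)) (if i = z then {True} else {False}))"
      unfolding P_def Az_def by (rule measure_Pi_pmf_Pi) simp
    also have "\<dots> = (\<Prod>i\<in>{..<n}. (if i = z then 1 / real n else 1 - 1 / real n))"
      using p01 by (intro prod.cong refl) (auto simp: measure_pmf_single)
    also have "\<dots> = (1 / real n) * (\<Prod>i\<in>{..<n} - {z}. (if i = z then 1 / real n else 1 - 1 / real n))"
      using z by (subst prod.remove[of _ z]) auto
    also have "(\<Prod>i\<in>{..<n} - {z}. (if i = z then 1 / real n else 1 - 1 / real n)) = (\<Prod>i\<in>{..<n} - {z}. 1 - 1 / real n)"
      by (intro prod.cong) auto
    also have "\<dots> = (1 - 1 / real n) ^ (n - 1)" using z by simp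
    finally show ?thesis .
  qed
  have disj: "disjoint_family_on Az Z"
    unfolding disjoint_family_on_def Az_def Z_def Pi_def by auto
  have "measure_pmf.prob P (\<Union>z\<in>Z. Az z) = (\<Sum>z\<in>Z. measure_pmf.prob P (Az z))"
    by (rule measure_pmf.finite_measure_finite_Union) (use disj in \<open>auto simp: Z_def\<close>)
  also have "\<dots> = (\<Sum>z\<in>Z. (1 / real n) * (1 - 1 / real n) ^ (n - 1))"
    by (intro sum.cong refl meas) (auto simp: Z_def)
  also have "\<dots> = real (n - card x) * ((1 / real n) * (1 - 1 / real n) ^ (n - 1))"
    using x fx by (simp add: Z_def card_Diff_subset)
  finally have eqU: "measure_pmf.prob P (\<Union>z\<in>Z. Az z) = real (n - card x) * ((1 / real n) * (1 - 1 / real n) ^ (n - 1))" .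
  have "real (n - card x) / (exp 1 * real n) = real (n - card x) * ((1 / real n) * exp (-1))"
    by (simp add: exp_minus field_simps)
  also have "\<dots> \<le> real (n - card x) * ((1 / real n) * (1 - 1 / real n) ^ (n - 1))"
    using one_minus_inv_pow_ge[OF n] by (intro mult_left_mono) auto
  also have "\<dots> = measure_pmf.prob P (\<Union>z\<in>Z. Az z)" using eqU by simp
  also have "\<dots> \<le> measure_pmf.prob P ((\<lambda>b. flip x {i. i < n \<and> b i}) -` {y. onemax x < onemax y})"
    by (rule measure_pmf.finite_measure_mono[OF sub]) simp
  also have "\<dots> = measure_pmf.prob (ea_mutation n x) {y. onemax x < onemax y}"
    unfolding ea_mutation_def P_def by simp
  finally show ?thesis .
qed

lemma expectation_binomial_Suc:
  fixes g :: "nat \<Rightarrow> real"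
  assumes p: "p \<in> {0..1}"
  shows "measure_pmf.expectation (binomial_pmf (Suc n) p) g =
         p * measure_pmf.expectation (binomial_pmf n p) (\<lambda>k. g (Suc k)) + (1 - p) * measure_pmf.expectation (binomial_pmf n p) g"
proof -
  have "binomial_pmf (Suc n) p = bernoulli_pmf p \<bind> (\<lambda>b. map_pmf (\<lambda>k. (if b then 1 else 0) + k) (binomial_pmf n p))"
    using p by (simp add: binomial_pmf_Suc map_pmf_def)
  also have "measure_pmf.expectation \<dots> g = (\<Sum>b\<in>UNIV. pmf (bernoulli_pmf p) b *\<^sub>R measure_pmf.expectation (map_pmf (\<lambda>k. (if b then 1 else 0) + k) (binomial_pmf n p)) g)"
    by (rule pmf_expectation_bind) (use p in \<open>auto intro!: finite_imageI finite_set_pmf_binomial_pmf\<close>)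
  also have "\<dots> = p * measure_pmf.expectation (binomial_pmf n p) (\<lambda>k. g (Suc k)) + (1 - p) * measure_pmf.expectation (binomial_pmf n p) g"
    using p by (simp add: UNIV_bool)
  finally show ?thesis .
qed

lemma binomial_moments:
  assumes p: "p \<in> {0..1}"
  shows "measure_pmf.expectation (binomial_pmf n p) real = n * p \<and>
         measure_pmf.expectation (binomial_pmf n p) (\<lambda>k. (real k)\<^sup>2) = n * p + n * (real n - 1) * p\<^sup>2"
proof (induction n)
  case 0
  then show ?case using p by (simp add: binomial_pmf_0)
next
  case (Suc n)
  have i1: "integrable (measure_pmf (binomial_pmf n p)) (\<lambda>k. real k)" using p by simp
  have i2: "integrable (measure_pmf (binomial_pmf n p)) (\<lambda>k. (real k)\<^sup>2)" using p by simp
  have e1: "measure_pmf.expectation (binomial_pmf n p) (\<lambda>k. real (Suc k)) = 1 + n * p"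
    using Suc.IH i1 by (simp add: Bochner_Integration.integral_add)
  have e2: "measure_pmf.expectation (binomial_pmf n p) (\<lambda>k. (real (Suc k))\<^sup>2) = 1 + 2 * (n * p) + (n * p + n * (real n - 1) * p\<^sup>2)"
  proof -
    have "(\<lambda>k. (real (Suc k))\<^sup>2) = (\<lambda>k. 1 + (2 * real k + (real k)\<^sup>2))"
      by (auto simp: power2_eq_square algebra_simps)
    then show ?thesis
      using Suc.IH i1 i2 by (simp add: Bochner_Integration.integral_add)
  qed
  show ?case
  proof
    show "measure_pmf.expectation (binomial_pmf (Suc n) p) real = real (Suc n) * p"
      using expectation_binomial_Suc[OF p, of n real] e1 Suc.IH by (simp add: algebra_simps)
    show "measure_pmf.expectation (binomial_pmf (Suc n) p) (\<lambda>k. (real k)\<^sup>2) = real (Suc n) * p + real (Suc n) * (real (Suc n) - 1) * p\<^sup>2"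
      using expectation_binomial_Suc[OF p, of n "\<lambda>k. (real k)\<^sup>2"] e2 Suc.IH
      by (cases n) (simp_all add: algebra_simps power2_eq_square)
  qed
qed

lemma binomial_conc:
  assumes L8: "8 \<le> L" and Ln: "L \<le> n"
  shows "measure_pmf.prob (binomial_pmf n (real L / real n)) {l. \<bar>real l - real L\<bar> < real L / 2} \<ge> 1 / 2"
proof -
  define p where "p = real L / real n"
  have n0: "n > 0" using L8 Ln by auto
  have p: "p \<in> {0..1}" using Ln n0 by (auto simp: p_def)
  define B where "B = binomial_pmf n p"
  have m1: "measure_pmf.expectation B real = real L"
    using binomial_moments[OF p, of n] n0 by (simp add: B_def p_def)
  have m2: "measure_pmf.expectation B (\<lambda>k. (real k)\<^sup>2) = n * p + n * (real n - 1) * p\<^sup>2"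
    using binomial_moments[OF p, of n] by (simp add: B_def)
  have var: "measure_pmf.variance B real \<le> real L"
  proof -
    have "measure_pmf.variance B real = n * p + n * (real n - 1) * p\<^sup>2 - (real L)\<^sup>2"
      using m1 m2 p by (subst measure_pmf.variance_eq) (auto simp: B_def)
    also have "\<dots> = real L - real L * p"
      using n0 by (simp add: p_def power2_eq_square field_simps of_nat_diff)
    also have "\<dots> \<le> real L" using p by simp
    finally show ?thesis .
  qed
  have "measure_pmf.prob B {x \<in> space (measure_pmf B). \<bar>real x - measure_pmf.expectation B real\<bar> \<ge> real L / 2} \<le> measure_pmf.variance B real / (real L / 2)\<^sup>2"
    by (rule measure_pmf.Chebyshev_inequality) (use L8 p in \<open>auto simp: B_def\<close>)
  also have "\<dots> \<le> real L / (real L / 2)\<^sup>2"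
    by (intro divide_right_mono var) auto
  also have "\<dots> \<le> 1 / 2"
    using L8 by (simp add: power2_eq_square field_simps)
  finally have "measure_pmf.prob B {l. \<bar>real l - real L\<bar> \<ge> real L / 2} \<le> 1 / 2"
    using m1 by simp
  moreover have "measure_pmf.prob B {l. \<bar>real l - real L\<bar> < real L / 2} = 1 - measure_pmf.prob B {l. \<bar>real l - real L\<bar> \<ge> real L / 2}"
    by (subst measure_pmf.prob_compl[symmetric]) (auto intro!: arg_cong[where f="measure_pmf.prob B"])
  ultimately show ?thesis by (simp add: B_def p_def)
qed

lemma bind_lower:
  fixes M :: "'a pmf" and f :: "'a \<Rightarrow> 'b pmf"
  assumes h: "\<And>a. a \<in> set_pmf M \<Longrightarrow> a \<in> A \<Longrightarrow> measure_pmf.prob (f a) E \<ge> c" and c: "c \<ge> 0"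
  shows "measure_pmf.prob (bind_pmf M f) E \<ge> c * measure_pmf.prob M A"
proof -
  have "ennreal (c * measure_pmf.prob M A) = (\<integral>\<^sup>+a. ennreal c * indicator A a \<partial>measure_pmf M)"
    using c by (simp add: nn_integral_cmult measure_pmf.emeasure_eq_measure ennreal_mult)
  also have "\<dots> \<le> (\<integral>\<^sup>+a. emeasure (measure_pmf (f a)) E \<partial>measure_pmf M)"
  proof (intro nn_integral_mono_AE)
    show "AE a in measure_pmf M. ennreal c * indicator A a \<le> emeasure (measure_pmf (f a)) E"
      using h by (auto simp: AE_measure_pmf_iff indicator_def measure_pmf.emeasure_eq_measure)
  qed
  also have "\<dots> = (\<integral>\<^sup>+a. \<integral>\<^sup>+y. indicator E y \<partial>measure_pmf (f a) \<partial>measure_pmf M)"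
    by simp
  also have "\<dots> = emeasure (measure_pmf (bind_pmf M f)) E"
    by (subst nn_integral_indicator[symmetric]) (simp_all del: nn_integral_indicator)
  also have "\<dots> = ennreal (measure_pmf.prob (bind_pmf M f) E)"
    by (simp add: measure_pmf.emeasure_eq_measure)
  finally show ?thesis by (simp add: ennreal_le_iff)
qed

lemma best_of_support:
  assumes L: "L \<ge> 1" and y: "y \<in> set_pmf (best_of L off)"
  shows "(\<exists>j<L. y = off j) \<and> (\<forall>j<L. onemax (off j) \<le> onemax y)"
proof -
  define M where "M = Max ((\<lambda>j. onemax (off j)) ` {..<L})"
  define J where "J = {j. j < L \<and> onemax (off j) = M}"
  have fin: "finite J" by (auto simp: J_def)
  have ne: "J \<noteq> {}"
  proof -
    have "M \<in> (\<lambda>j. onemax (off j)) ` {..<L}" unfolding M_def using L by (intro Max_in) (auto simp: lessThan_empty_iff)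
    then show ?thesis by (auto simp: J_def)
  qed
  have "set_pmf (best_of L off) = off ` J"
    unfolding best_of_def Let_def M_def[symmetric] J_def[symmetric] using fin ne by simp
  with y obtain j where j: "j \<in> J" "y = off j" by auto
  have "\<forall>j'<L. onemax (off j') \<le> M" unfolding M_def by (intro allI impI Max_ge) auto
  then show ?thesis using j by (auto simp: J_def)
qed

definition kappa :: real where "kappa = exp (-2) / 4 * (1 - exp (-1))"

lemma kappa_pos: "kappa > 0"
  unfolding kappa_def by (simp add: exp_minus field_simps)

lemma prod_if_const:
  assumes "finite A"
  shows "(\<Prod>i\<in>A. (if i \<in> S then c else 1)) = c ^ card (A \<inter> S)"
  using assms by (simp add: prod.If_cases Int_def)

lemma cross_success:
  assumes x: "x \<subseteq> {..<n}" and F: "F \<subseteq> {..<n}" and g: "g \<in> F" "g \<notin> x"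
    and L: "L \<ge> 2" and bF: "card (F \<inter> x) \<le> 2 * L"
  shows "measure_pmf.prob (Pi_pmf ({..<L} \<times> {..<n}) False (\<lambda>_. bernoulli_pmf (1 / real L)))
           {cs. \<exists>j<L. onemax x < onemax {i. i < n \<and> (if cs (j, i) then i \<in> flip x F else i \<in> x)}} \<ge> kappa"
proof -
  define q where "q = 1 / real L"
  define Bd where "Bd = F \<inter> x"
  define b where "b = card Bd"
  define P where "P = Pi_pmf ({..<L} \<times> {..<n}) False (\<lambda>_. bernoulli_pmf q)"
  define D where "D j = Pi ({..<L} \<times> {..<n}) (\<lambda>(a, i). if i = g \<and> a < j then {False} else if i = g \<and> a = j then {True}
                          else if a = j \<and> i \<in> Bd then {False} else UNIV)" for j
  have q01: "0 \<le> q" "q \<le> 1" using L by (auto simp: q_def)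
  have gn: "g < n" using g F by auto
  have gB: "g \<notin> Bd" using g by (auto simp: Bd_def)
  have Bdn: "Bd \<subseteq> {..<n}" using F by (auto simp: Bd_def)
  have fx: "finite x" using x finite_subset by blast
  have Dsub: "D j \<subseteq> {cs. \<exists>j<L. onemax x < onemax {i. i < n \<and> (if cs (j, i) then i \<in> flip x F else i \<in> x)}}"
    if j: "j < L" for j
  proof
    fix cs assume cs: "cs \<in> D j"
    let ?y = "{i. i < n \<and> (if cs (j, i) then i \<in> flip x F else i \<in> x)}"
    have csD: "cs (a, i) \<in> (if i = g \<and> a < j then {False} else if i = g \<and> a = j then {True}
                          else if a = j \<and> i \<in> Bd then {False} else UNIV)" if "a < L" "i < n" for a i
      using cs that unfolding D_def Pi_def by auto
    have c1: "cs (j, g)" using csD[of j g] j gn by simp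
    have c2: "\<not> cs (j, i)" if "i \<in> Bd" for i
    proof -
      have "i < n" "i \<noteq> g" using that gB Bdn by auto
      then show ?thesis using csD[of j i] j that by auto
    qed
    have "insert g x \<subseteq> ?y"
    proof
      fix i assume i: "i \<in> insert g x"
      show "i \<in> ?y"
      proof (cases "i = g")
        case True then show ?thesis using c1 g gn by (auto simp: flip_def)
      next
        case False
        then have ix: "i \<in> x" using i by auto
        have "i < n" using ix x by auto
        moreover have "(if cs (j, i) then i \<in> flip x F else i \<in> x)"
          using c2[of i] ix by (auto simp: flip_def Bd_def)
        ultimately show ?thesis by simp
      qed
    qed
    then have "card (insert g x) \<le> card ?y" by (intro card_mono) auto
    then have "onemax x < onemax ?y" using g fx by (simp add: onemax_def)
    then show "cs \<in> {cs. \<exists>j<L. onemax x < onemax {i. i < n \<and> (if cs (j, i) then i \<in> flip x F else i \<in> x)}}"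
      using j by blast
  qed
  have measD: "measure_pmf.prob P (D j) = (1 - q) ^ j * (q * (1 - q) ^ b)" if j: "j < L" for j
  proof -
    define fac where "fac a i = (if i = g \<and> a < j then 1 - q else if i = g \<and> a = j then q else if a = j \<and> i \<in> Bd then 1 - q else 1)" for a i
    have "measure_pmf.prob P (D j) = (\<Prod>ai\<in>{..<L} \<times> {..<n}. measure_pmf.prob (bernoulli_pmf q)
           ((\<lambda>(a, i). if i = g \<and> a < j then {False} else if i = g \<and> a = j then {True} else if a = j \<and> i \<in> Bd then {False} else UNIV) ai))"
      unfolding P_def D_def by (rule measure_Pi_pmf_Pi) simp
    also have "\<dots> = (\<Prod>(a, i)\<in>{..<L} \<times> {..<n}. fac a i)"
      using q01 by (intro prod.cong refl) (auto simp: fac_def measure_pmf_single)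
    also have "\<dots> = (\<Prod>a\<in>{..<L}. \<Prod>i\<in>{..<n}. fac a i)"
      by (rule prod.cartesian_product[symmetric])
    also have "\<dots> = (\<Prod>a\<in>{..<L}. (if a < j then 1 - q else 1) * (if a = j then q * (1 - q) ^ b else 1))"
    proof (intro prod.cong refl)
      fix a assume a: "a \<in> {..<L}"
      consider "a < j" | "a = j" | "a > j" by linarith
      then show "(\<Prod>i\<in>{..<n}. fac a i) = (if a < j then 1 - q else 1) * (if a = j then q * (1 - q) ^ b else 1)"
      proof cases
        case 1
        then have "(\<Prod>i\<in>{..<n}. fac a i) = (\<Prod>i\<in>{..<n}. if i = g then 1 - q else 1)"
          by (intro prod.cong) (auto simp: fac_def)
        also have "\<dots> = 1 - q" using gn by (simp add: prod.delta)
        finally show ?thesis using 1 by simp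
      next
        case 2
        then have "(\<Prod>i\<in>{..<n}. fac a i) = (\<Prod>i\<in>{..<n}. (if i = g then q else 1) * (if i \<in> Bd then 1 - q else 1))"
          using gB by (intro prod.cong) (auto simp: fac_def)
        also have "\<dots> = q * (1 - q) ^ card ({..<n} \<inter> Bd)"
          using gn by (simp add: prod.distrib prod.delta prod_if_const)
        also have "{..<n} \<inter> Bd = Bd" using Bdn by auto
        finally show ?thesis using 2 by (simp add: b_def)
      next
        case 3
        then have "(\<Prod>i\<in>{..<n}. fac a i) = (\<Prod>i\<in>{..<n}. 1)"
          by (intro prod.cong) (auto simp: fac_def)
        then show ?thesis using 3 by simp
      qed
    qed
    also have "\<dots> = (1 - q) ^ card ({..<L} \<inter> {a. a < j}) * (q * (1 - q) ^ b)"
      using j by (simp add: prod.distrib prod.delta prod_if_const[where S="{a. a < j}", simplified])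
    also have "{..<L} \<inter> {a. a < j} = {..<j}" using j by auto
    finally show ?thesis by simp
  qed
  have disj: "disjoint_family_on D {..<L}"
  proof (unfold disjoint_family_on_def, intro ballI impI)
    fix j1 j2 assume j: "j1 \<in> {..<L}" "j2 \<in> {..<L}" "j1 \<noteq> j2"
    show "D j1 \<inter> D j2 = {}"
    proof (rule ccontr)
      assume "D j1 \<inter> D j2 \<noteq> {}"
      then obtain cs where cs: "cs \<in> D j1" "cs \<in> D j2" by blast
      have csD: "cs (a, i) \<in> (if i = g \<and> a < jj then {False} else if i = g \<and> a = jj then {True}
                          else if a = jj \<and> i \<in> Bd then {False} else UNIV)" if "a < L" "i < n" "cs \<in> D jj" for a i jj
        using that unfolding D_def Pi_def by auto
      have "cs (j1, g)" using csD[of j1 g j1] cs j gn by simp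
      moreover have "cs (j2, g)" using csD[of j2 g j2] cs j gn by simp
      moreover have "j1 < j2 \<Longrightarrow> \<not> cs (j1, g)" using csD[of j1 g j2] cs j gn by simp
      moreover have "j2 < j1 \<Longrightarrow> \<not> cs (j2, g)" using csD[of j2 g j1] cs j gn by simp
      ultimately show False using j by linarith
    qed
  qed
  have "measure_pmf.prob P (\<Union>j\<in>{..<L}. D j) = (\<Sum>j<L. measure_pmf.prob P (D j))"
    by (rule measure_pmf.finite_measure_finite_Union) (use disj in auto)
  also have "\<dots> = (\<Sum>j<L. (1 - q) ^ j) * (q * (1 - q) ^ b)"
    by (simp add: measD sum_distrib_right)
  also have "\<dots> = (1 - q) ^ b * (1 - (1 - q) ^ L)"
  proof -
    have qp: "q > 0" using L by (simp add: q_def)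
    have "(\<Sum>j<L. (1 - q) ^ j) = (1 - (1 - q) ^ L) / q"
      using qp by (simp add: sum_gp_strict)
    then show ?thesis using qp by (simp add: divide_simps)
  qed
  finally have U: "measure_pmf.prob P (\<Union>j\<in>{..<L}. D j) = (1 - q) ^ b * (1 - (1 - q) ^ L)" .
  have b1: "(1 - q) ^ b \<ge> exp (-2) / 4"
  proof -
    have "(1 - q) ^ (2 * L) \<le> (1 - q) ^ b"
      using bF q01 by (intro power_decreasing) (auto simp: b_def Bd_def)
    moreover have "(1 - q) ^ (2 * L) = ((1 - q) ^ (L - 1)) ^ 2 * (1 - q) ^ 2"
    proof -
      have "2 * L = 2 * (L - 1) + 2" using L by simp
      then have "(1 - q) ^ (2 * L) = (1 - q) ^ (2 * (L - 1)) * (1 - q) ^ 2" by (metis power_add)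
      then show ?thesis by (simp add: power_mult[symmetric] mult.commute)
    qed
    moreover have "exp (-1) ^ 2 * (1 / 2) ^ 2 \<le> ((1 - q) ^ (L - 1)) ^ 2 * (1 - q) ^ 2"
    proof (rule mult_mono)
      show "exp (-1) ^ 2 \<le> ((1 - q) ^ (L - 1)) ^ 2"
        using one_minus_inv_pow_ge[of L] L by (intro power_mono) (auto simp: q_def)
      show "(1 / 2) ^ 2 \<le> (1 - q) ^ 2"
        using L by (intro power_mono) (auto simp: q_def field_simps)
    qed (use q01 in auto)
    moreover have "exp (-1::real) ^ 2 = exp (-2)" by (simp add: power2_eq_square flip: exp_add)
    ultimately show ?thesis by (simp add: power2_eq_square)
  qed
  have b2: "1 - (1 - q) ^ L \<ge> 1 - exp (-1)"
  proof -
    have "(1 - q) ^ L \<le> exp (- q) ^ L"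
      using q01 by (intro power_mono) (auto simp: exp_ge_add_one_self[of "-q", simplified])
    also have "\<dots> = exp (-1)" using L by (simp add: exp_of_nat_mult[symmetric] q_def)
    finally show ?thesis by simp
  qed
  have "kappa \<le> (1 - q) ^ b * (1 - (1 - q) ^ L)"
    unfolding kappa_def using b1 b2 q01
    by (intro mult_mono) (auto simp: exp_minus field_simps)
  also have "\<dots> \<le> measure_pmf.prob P {cs. \<exists>j<L. onemax x < onemax {i. i < n \<and> (if cs (j, i) then i \<in> flip x F else i \<in> x)}}"
    unfolding U[symmetric] by (rule measure_pmf.finite_measure_mono) (use Dsub in blast, simp)
  finally show ?thesis by (simp add: P_def q_def)
qed

lemma choose_step: "Suc k * (n choose Suc k) = (n - k) * (n choose k)"
  using binomial_absorption[of k n] binomial_absorb_comp[of n k] by simp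

lemma choose_ratio:
  assumes "m \<le> n"
  shows "real (m choose l) / real (n choose l) \<le> (real m / real n) ^ l"
proof (induction l)
  case 0 then show ?case by simp
next
  case (Suc l)
  show ?case
  proof (cases "n choose Suc l = 0")
    case True then show ?thesis by (simp add: True)
  next
    case False
    then have ln: "Suc l \<le> n" by (simp add: binomial_eq_0_iff)
    have nl: "real (n choose l) > 0" using ln by simp
    have e1: "real (m choose Suc l) = real (m - l) * real (m choose l) / real (Suc l)"
      using choose_step[of l m] by (simp add: field_simps flip: of_nat_mult)
    have e2: "real (n choose Suc l) = real (n - l) * real (n choose l) / real (Suc l)"
      using choose_step[of l n] by (simp add: field_simps flip: of_nat_mult)
    have nl2: "real (n - l) > 0" using ln by simp
    have "real (m choose Suc l) / real (n choose Suc l) = (real (m choose l) / real (n choose l)) * (real (m - l) / real (n - l))"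
    proof -
      have gen: "(c * a / s) / (d * b / s) = (a / b) * (c / d)" if "s > 0" "b > 0" "d > 0" for a b c d s :: real
        using that by (simp add: field_simps)
      show ?thesis unfolding e1 e2 by (rule gen) (use nl nl2 in auto)
    qed
    also have "\<dots> \<le> (real m / real n) ^ l * (real m / real n)"
    proof (rule mult_mono)
      show "real (m - l) / real (n - l) \<le> real m / real n"
      proof (cases "l \<le> m")
        case True
        have "real (m - l) * real n \<le> real m * real (n - l)"
          using True ln assms by (simp add: of_nat_diff algebra_simps mult_left_mono)
        then show ?thesis using nl2 ln by (simp add: field_simps)
      next
        case False then show ?thesis by simp
      qed
    qed (use Suc.IH in auto)
    finally show ?thesis by (simp add: mult.commute)
  qed
qed

lemma mut_hit:
  assumes x: "x \<subseteq> {..<n}" and ln: "l \<le> n" and n: "n \<ge> 1"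
  shows "measure_pmf.prob (Pi_pmf {..<L} {} (\<lambda>_. map_pmf (flip x) (pmf_of_set {F. F \<subseteq> {..<n} \<and> card F = l})))
           {offs. \<exists>j<L. offs j \<inter> ({..<n} - x) \<noteq> {}} \<ge> 1 - (1 - real (n - card x) / real n) ^ (l * L)"
proof -
  define S where "S = {F. F \<subseteq> {..<n} \<and> card F = l}"
  define Z where "Z = {..<n} - x"
  define Q where "Q = map_pmf (flip x) (pmf_of_set S)"
  have fx: "finite x" using x finite_subset by blast
  have cx: "card x \<le> n" using card_mono[OF _ x] by simp
  have Sfin: "finite S" unfolding S_def by (rule finite_subset[of _ "Pow {..<n}"]) auto
  have Sne: "S \<noteq> {}"
  proof -
    have "{..<l} \<in> S" using ln unfolding S_def by auto
    then show ?thesis by blast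
  qed
  have cardS: "card S = n choose l" unfolding S_def using n_subsets[of "{..<n}" l] by simp
  have eqS: "S \<inter> {F. flip x F \<inter> Z = {}} = {F. F \<subseteq> x \<and> card F = l}"
    using x by (auto simp: S_def Z_def flip_def)
  have cardS2: "card {F. F \<subseteq> x \<and> card F = l} = card x choose l" using n_subsets[OF fx] .
  have mQ: "measure_pmf.prob Q {y. y \<inter> Z = {}} \<le> (1 - real (n - card x) / real n) ^ l"
  proof -
    have "measure_pmf.prob Q {y. y \<inter> Z = {}} = measure_pmf.prob (pmf_of_set S) {F. flip x F \<inter> Z = {}}"
      by (simp add: Q_def)
    also have "\<dots> = real (card x choose l) / real (n choose l)"
      using Sfin Sne by (simp add: measure_pmf_of_set eqS cardS2 cardS)
    also have "\<dots> \<le> (real (card x) / real n) ^ l" by (rule choose_ratio[OF cx])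
    also have "real (card x) / real n = 1 - real (n - card x) / real n"
      using n cx by (simp add: of_nat_diff field_simps)
    finally show ?thesis .
  qed
  have C: "measure_pmf.prob (Pi_pmf {..<L} {} (\<lambda>_. Q)) (Pi {..<L} (\<lambda>_. {y. y \<inter> Z = {}})) \<le> (1 - real (n - card x) / real n) ^ (l * L)"
  proof -
    have "measure_pmf.prob (Pi_pmf {..<L} {} (\<lambda>_. Q)) (Pi {..<L} (\<lambda>_. {y. y \<inter> Z = {}})) = (measure_pmf.prob Q {y. y \<inter> Z = {}}) ^ L"
      by (subst measure_Pi_pmf_Pi) auto
    also have "\<dots> \<le> ((1 - real (n - card x) / real n) ^ l) ^ L"
      using mQ by (intro power_mono) auto
    finally show ?thesis by (simp add: power_mult)
  qed
  have "{offs. \<exists>j<L. offs j \<inter> Z \<noteq> {}} = UNIV - Pi {..<L} (\<lambda>_. {y. y \<inter> Z = {}})"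
    by (auto simp: Pi_def)
  then have "measure_pmf.prob (Pi_pmf {..<L} {} (\<lambda>_. Q)) {offs. \<exists>j<L. offs j \<inter> Z \<noteq> {}} =
        1 - measure_pmf.prob (Pi_pmf {..<L} {} (\<lambda>_. Q)) (Pi {..<L} (\<lambda>_. {y. y \<inter> Z = {}}))"
    using measure_pmf.prob_compl[of "Pi {..<L} (\<lambda>_. {y. y \<inter> Z = {}})" "Pi_pmf {..<L} {} (\<lambda>_. Q)"] by simp
  then show ?thesis using C by (simp add: Q_def S_def Z_def)
qed

lemma prob_one_if_support:
  assumes "set_pmf M \<subseteq> E"
  shows "measure_pmf.prob M E = 1"
  using assms measure_pmf.prob_eq_1[of E M] by (auto simp: AE_measure_pmf_iff)

lemma onemax_flip_int:
  assumes x: "x \<subseteq> {..<n}" and F: "F \<subseteq> {..<n}"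
  shows "int (onemax (flip x F)) = int (card x) + int (card F) - 2 * int (card (F \<inter> x))"
proof -
  have fx: "finite x" using x finite_subset by blast
  have fF: "finite F" using F finite_subset by blast
  have "flip x F = (x - F) \<union> (F - x)" by (simp add: flip_def)
  then have "card (flip x F) = card (x - F) + card (F - x)"
    using fx fF by (simp add: card_Un_disjoint Int_commute Diff_Int_distrib)
  moreover have "card (x - F) = card x - card (F \<inter> x)"
    using fx by (metis Int_commute card_Diff_subset_Int Diff_Int2 Diff_Int_distrib2 inf.cobounded1 finite_Int card_Diff_subset)
  moreover have "card (F - x) = card F - card (F \<inter> x)"
    using fF by (simp add: card_Diff_subset_Int)
  moreover have "card (F \<inter> x) \<le> card x" "card (F \<inter> x) \<le> card F"
    using fx fF by (auto intro: card_mono)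
  ultimately show ?thesis by (simp add: onemax_def of_nat_diff)
qed

lemma best_hit:
  assumes L: "L \<ge> 1" and x: "x \<subseteq> {..<n}"
    and offs: "\<And>j. j < L \<Longrightarrow> \<exists>F. F \<subseteq> {..<n} \<and> card F = l \<and> offs j = flip x F"
    and hit: "\<exists>j<L. offs j \<inter> ({..<n} - x) \<noteq> {}"
    and x': "x' \<in> set_pmf (best_of L offs)"
  shows "\<exists>F. F \<subseteq> {..<n} \<and> card F = l \<and> x' = flip x F \<and> (\<exists>g\<in>F. g \<notin> x)"
proof -
  obtain j0 where j0: "j0 < L" "x' = offs j0" and mx: "\<forall>j<L. onemax (offs j) \<le> onemax x'"
    using best_of_support[OF L x'] by blast
  obtain F0 where F0: "F0 \<subseteq> {..<n}" "card F0 = l" "offs j0 = flip x F0" using offs[OF j0(1)] by blast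
  obtain j1 where j1: "j1 < L" "offs j1 \<inter> ({..<n} - x) \<noteq> {}" using hit by blast
  obtain F1 where F1: "F1 \<subseteq> {..<n}" "card F1 = l" "offs j1 = flip x F1" using offs[OF j1(1)] by blast
  have fF1: "finite F1" using F1 finite_subset by blast
  have "F1 - x \<noteq> {}" using j1(2) F1 by (auto simp: flip_def)
  then have "F1 \<inter> x \<subset> F1" by blast
  then have c1: "card (F1 \<inter> x) < l" using fF1 F1 by (metis psubset_card_mono)
  show ?thesis
  proof (rule exI[of _ F0], intro conjI)
    show "\<exists>g\<in>F0. g \<notin> x"
    proof (rule ccontr)
      assume "\<not> (\<exists>g\<in>F0. g \<notin> x)"
      then have "F0 \<inter> x = F0" by blast
      then have "int (onemax x') = int (card x) - int l"
        using onemax_flip_int[OF x F0(1)] F0 j0 by simp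
      moreover have "int (onemax (offs j1)) = int (card x) + int l - 2 * int (card (F1 \<inter> x))"
        using onemax_flip_int[OF x F1(1)] F1 by simp
      moreover have "onemax (offs j1) \<le> onemax x'" using mx j1 by blast
      ultimately show False using c1 by linarith
    qed
  qed (use F0 j0 in auto)
qed

definition ga_rest :: "nat \<Rightarrow> nat \<Rightarrow> nat set \<Rightarrow> nat \<Rightarrow> nat set pmf" where
  "ga_rest n lam x l =
     bind_pmf (Pi_pmf {..<lam} {}
                 (\<lambda>_. map_pmf (flip x) (pmf_of_set {F. F \<subseteq> {..<n} \<and> card F = l}))) (\<lambda>offs.
     bind_pmf (best_of lam offs) (\<lambda>x'.
     bind_pmf (Pi_pmf ({..<lam} \<times> {..<n}) False (\<lambda>_. bernoulli_pmf (1 / real lam))) (\<lambda>cs.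
     bind_pmf (best_of lam (\<lambda>j. {i. i < n \<and> (if cs (j, i) then i \<in> x' else i \<in> x)})) (\<lambda>y.
     return_pmf (if onemax y \<ge> onemax x then y else x)))))"

lemma ga_iteration_alt: "ga_iteration n lam x = bind_pmf (binomial_pmf n (real lam / real n)) (ga_rest n lam x)"
  unfolding ga_iteration_def ga_rest_def ..

lemma ga_rest_improve:
  assumes x: "x \<subseteq> {..<n}" and ln: "l \<le> n" and n: "n \<ge> 1" and L: "L \<ge> 2" and l2: "l \<le> 2 * L"
  shows "measure_pmf.prob (ga_rest n L x l) {r. onemax x < onemax r} \<ge> kappa * (1 - (1 - real (n - card x) / real n) ^ (l * L))"
proof -
  define S where "S = {F. F \<subseteq> {..<n} \<and> card F = l}"
  define E where "E = {r. onemax x < onemax r}"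
  have Sfin: "finite S" unfolding S_def by (rule finite_subset[of _ "Pow {..<n}"]) auto
  have Sne: "S \<noteq> {}"
  proof -
    have "{..<l} \<in> S" using ln unfolding S_def by auto
    then show ?thesis by blast
  qed
  have inner: "measure_pmf.prob (bind_pmf (Pi_pmf ({..<L} \<times> {..<n}) False (\<lambda>_. bernoulli_pmf (1 / real L))) (\<lambda>cs.
     bind_pmf (best_of L (\<lambda>j. {i. i < n \<and> (if cs (j, i) then i \<in> x' else i \<in> x)})) (\<lambda>y.
     return_pmf (if onemax y \<ge> onemax x then y else x)))) E \<ge> kappa"
    if F: "F \<subseteq> {..<n}" "card F = l" "x' = flip x F" "\<exists>g\<in>F. g \<notin> x" for x' F
  proof -
    obtain g where g: "g \<in> F" "g \<notin> x" using F by blast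
    have bF: "card (F \<inter> x) \<le> 2 * L"
      using F l2 card_mono[of F "F \<inter> x"] F finite_subset[OF F(1)] by (meson finite_lessThan inf_le1 le_trans card_mono)
    have "kappa * 1 \<le> 1 * measure_pmf.prob (Pi_pmf ({..<L} \<times> {..<n}) False (\<lambda>_. bernoulli_pmf (1 / real L)))
           {cs. \<exists>j<L. onemax x < onemax {i. i < n \<and> (if cs (j, i) then i \<in> flip x F else i \<in> x)}}"
      using cross_success[OF x F(1) g L bF] by simp
    also have "\<dots> \<le> measure_pmf.prob (bind_pmf (Pi_pmf ({..<L} \<times> {..<n}) False (\<lambda>_. bernoulli_pmf (1 / real L))) (\<lambda>cs.
     bind_pmf (best_of L (\<lambda>j. {i. i < n \<and> (if cs (j, i) then i \<in> x' else i \<in> x)})) (\<lambda>y.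
     return_pmf (if onemax y \<ge> onemax x then y else x)))) E"
    proof (rule bind_lower)
      fix cs assume cs: "cs \<in> {cs. \<exists>j<L. onemax x < onemax {i. i < n \<and> (if cs (j, i) then i \<in> flip x F else i \<in> x)}}"
      show "1 \<le> measure_pmf.prob (bind_pmf (best_of L (\<lambda>j. {i. i < n \<and> (if cs (j, i) then i \<in> x' else i \<in> x)})) (\<lambda>y.
             return_pmf (if onemax y \<ge> onemax x then y else x))) E"
      proof -
        have "set_pmf (bind_pmf (best_of L (\<lambda>j. {i. i < n \<and> (if cs (j, i) then i \<in> x' else i \<in> x)})) (\<lambda>y.
             return_pmf (if onemax y \<ge> onemax x then y else x))) \<subseteq> E"
        proof
          fix r assume "r \<in> set_pmf (bind_pmf (best_of L (\<lambda>j. {i. i < n \<and> (if cs (j, i) then i \<in> x' else i \<in> x)})) (\<lambda>y.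
             return_pmf (if onemax y \<ge> onemax x then y else x)))"
          then obtain y where y: "y \<in> set_pmf (best_of L (\<lambda>j. {i. i < n \<and> (if cs (j, i) then i \<in> x' else i \<in> x)}))"
            and r: "r = (if onemax y \<ge> onemax x then y else x)" by auto
          have L1: "L \<ge> 1" using L by simp
          obtain j where "j < L" "onemax x < onemax {i. i < n \<and> (if cs (j, i) then i \<in> flip x F else i \<in> x)}"
            using cs by blast
          then have "onemax x < onemax y"
            using best_of_support[OF L1 y] F(3) by (meson less_le_trans)
          then show "r \<in> E" using r by (simp add: E_def)
        qed
        then show ?thesis by (simp add: prob_one_if_support)
      qed
    qed simp
    finally show ?thesis by simp
  qed
  have "kappa * (1 - (1 - real (n - card x) / real n) ^ (l * L)) \<le>
        kappa * measure_pmf.prob (Pi_pmf {..<L} {} (\<lambda>_. map_pmf (flip x) (pmf_of_set S))) {offs. \<exists>j<L. offs j \<inter> ({..<n} - x) \<noteq> {}}"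
    using mut_hit[OF x ln n, of L] kappa_pos by (intro mult_left_mono) (auto simp: S_def)
  also have "\<dots> \<le> measure_pmf.prob (ga_rest n L x l) E"
    unfolding ga_rest_def S_def[symmetric]
  proof (rule bind_lower)
    fix offs assume offs: "offs \<in> set_pmf (Pi_pmf {..<L} {} (\<lambda>_. map_pmf (flip x) (pmf_of_set S)))"
      and hit: "offs \<in> {offs. \<exists>j<L. offs j \<inter> ({..<n} - x) \<noteq> {}}"
    have offs': "\<exists>F. F \<subseteq> {..<n} \<and> card F = l \<and> offs j = flip x F" if "j < L" for j
    proof -
      have "offs j \<in> set_pmf (map_pmf (flip x) (pmf_of_set S))"
        using offs that by (auto simp: set_Pi_pmf PiE_dflt_def)
      then show ?thesis using Sfin Sne by (auto simp: S_def)
    qed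
    have "kappa * measure_pmf.prob (best_of L offs) UNIV \<le> measure_pmf.prob (bind_pmf (best_of L offs) (\<lambda>x'.
     bind_pmf (Pi_pmf ({..<L} \<times> {..<n}) False (\<lambda>_. bernoulli_pmf (1 / real L))) (\<lambda>cs.
     bind_pmf (best_of L (\<lambda>j. {i. i < n \<and> (if cs (j, i) then i \<in> x' else i \<in> x)})) (\<lambda>y.
     return_pmf (if onemax y \<ge> onemax x then y else x))))) E"
    proof (rule bind_lower)
      fix x' assume x': "x' \<in> set_pmf (best_of L offs)"
      obtain F where "F \<subseteq> {..<n}" "card F = l" "x' = flip x F" "\<exists>g\<in>F. g \<notin> x"
        using best_hit[OF _ x offs' _ x'] L hit by auto
      then show "kappa \<le> measure_pmf.prob (bind_pmf (Pi_pmf ({..<L} \<times> {..<n}) False (\<lambda>_. bernoulli_pmf (1 / real L))) (\<lambda>cs.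
     bind_pmf (best_of L (\<lambda>j. {i. i < n \<and> (if cs (j, i) then i \<in> x' else i \<in> x)})) (\<lambda>y.
     return_pmf (if onemax y \<ge> onemax x then y else x)))) E"
        by (rule inner)
    qed (use kappa_pos in simp)
    then show "kappa \<le> measure_pmf.prob (bind_pmf (best_of L offs) (\<lambda>x'.
     bind_pmf (Pi_pmf ({..<L} \<times> {..<n}) False (\<lambda>_. bernoulli_pmf (1 / real L))) (\<lambda>cs.
     bind_pmf (best_of L (\<lambda>j. {i. i < n \<and> (if cs (j, i) then i \<in> x' else i \<in> x)})) (\<lambda>y.
     return_pmf (if onemax y \<ge> onemax x then y else x))))) E"
      by simp
  qed (use kappa_pos in simp)
  finally show ?thesis by (simp add: E_def)
qed

lemma one_minus_exp_ge: "(a::real) \<ge> 0 \<Longrightarrow> 1 - exp (- a) \<ge> a / (1 + a)"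
proof -
  assume a: "a \<ge> 0"
  have "1 + a \<le> exp a" using exp_ge_add_one_self[of a] by simp
  then have "exp (- a) \<le> 1 / (1 + a)" using a by (simp add: exp_minus field_simps)
  then show ?thesis using a by (simp add: field_simps)
qed

lemma ga_improve:
  assumes x: "x \<subseteq> {..<n}" and L8: "L \<ge> 8" and Ln: "L \<le> n"
  shows "measure_pmf.prob (ga_iteration n L x) {r. onemax x < onemax r} \<ge>
         kappa / 2 * ((real (n - card x) * real L ^ 2 / (2 * real n)) / (1 + real (n - card x) * real L ^ 2 / (2 * real n)))"
proof -
  define d where "d = real (n - card x)"
  define a where "a = d * real L ^ 2 / (2 * real n)"
  have n: "n \<ge> 1" using L8 Ln by simp
  have cx: "card x \<le> n" using card_mono[OF _ x] by simp
  have d0: "0 \<le> d" "d \<le> real n" by (auto simp: d_def)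
  have a0: "a \<ge> 0" using d0 by (simp add: a_def)
  have "kappa * (1 - exp (- a)) * (1 / 2) \<le> kappa * (1 - exp (- a)) * measure_pmf.prob (binomial_pmf n (real L / real n)) {l. \<bar>real l - real L\<bar> < real L / 2}"
    using binomial_conc[OF L8 Ln] kappa_pos a0 by (intro mult_left_mono) auto
  also have "\<dots> \<le> measure_pmf.prob (ga_iteration n L x) {r. onemax x < onemax r}"
    unfolding ga_iteration_alt
  proof (rule bind_lower)
    fix l assume l: "l \<in> set_pmf (binomial_pmf n (real L / real n))" "l \<in> {l. \<bar>real l - real L\<bar> < real L / 2}"
    have p01: "0 \<le> real L / real n" "real L / real n \<le> 1" using Ln n by auto
    have ln: "l \<le> n" using l(1) set_pmf_binomial_eq[OF p01, of n] by (auto split: if_splits)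
    have lab: "\<bar>real l - real L\<bar> < real L / 2" using l(2) by simp
    have lL: "real l \<ge> real L / 2" using lab by linarith
    have "real l \<le> 2 * real L" using lab by linarith
    then have l2: "l \<le> 2 * L" by linarith
    have "(1 - d / real n) ^ (l * L) \<le> exp (- (d / real n)) ^ (l * L)"
    proof (rule power_mono)
      show "1 - d / real n \<le> exp (- (d / real n))" using exp_ge_add_one_self[of "- (d / real n)"] by simp
      show "0 \<le> 1 - d / real n" using d0 n by (simp add: field_simps)
    qed
    also have "\<dots> = exp (- (d / real n) * real (l * L))" by (simp add: exp_of_nat_mult[symmetric] mult.commute)
    also have "\<dots> \<le> exp (- a)"
    proof -
      have "a \<le> d / real n * (real l * real L)"
      proof -
        have "real L / 2 * real L \<le> real l * real L" using lL by (intro mult_right_mono) auto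
        then have "real L * real L / 2 \<le> real l * real L" by simp
        then have "d * (real L * real L / 2) \<le> d * (real l * real L)" using d0 by (intro mult_left_mono) auto
        then show ?thesis using n by (simp add: a_def power2_eq_square field_simps)
      qed
      then show ?thesis by simp
    qed
    finally have "kappa * (1 - exp (- a)) \<le> kappa * (1 - (1 - d / real n) ^ (l * L))"
      using kappa_pos by (intro mult_left_mono) auto
    also have "\<dots> \<le> measure_pmf.prob (ga_rest n L x l) {r. onemax x < onemax r}"
      using ga_rest_improve[OF x ln n _ l2] L8 by (simp add: d_def)
    finally show "kappa * (1 - exp (- a)) \<le> measure_pmf.prob (ga_rest n L x l) {r. onemax x < onemax r}" .
  qed (use kappa_pos a0 in simp)
  finally have F1: "kappa / 2 * (1 - exp (- a)) \<le> measure_pmf.prob (ga_iteration n L x) {r. onemax x < onemax r}" by simp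
  have F2: "kappa / 2 * (a / (1 + a)) \<le> kappa / 2 * (1 - exp (- a))"
    using one_minus_exp_ge[OF a0] kappa_pos by (intro mult_left_mono) auto
  show ?thesis using order_trans[OF F2 F1] unfolding a_def d_def .
qed

lemma flip_subset: "x \<subseteq> {..<n} \<Longrightarrow> F \<subseteq> {..<n} \<Longrightarrow> flip x F \<subseteq> {..<n}"
  by (auto simp: flip_def)

lemma ea_mutation_support:
  assumes "x \<subseteq> {..<n}" "y \<in> set_pmf (ea_mutation n x)"
  shows "y \<subseteq> {..<n}"
  using assms by (auto simp: ea_mutation_def flip_def)

lemma ga_support:
  assumes L: "L \<ge> 1" and x: "x \<subseteq> {..<n}" and r: "r \<in> set_pmf (ga_iteration n L x)"
  shows "r \<subseteq> {..<n} \<and> onemax x \<le> onemax r"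
proof -
  from r obtain x' cs y where y: "y \<in> set_pmf (best_of L (\<lambda>j. {i. i < n \<and> (if cs (j, i) then i \<in> x' else i \<in> x)}))"
    and rr: "r = (if onemax y \<ge> onemax x then y else x)"
    unfolding ga_iteration_def by (auto simp del: set_bind_pmf simp: set_bind_pmf)
  have "y \<subseteq> {..<n}" using best_of_support[OF L y] by auto
  then show ?thesis using rr x by auto
qed

definition Hn :: "nat \<Rightarrow> real" where "Hn d = (\<Sum>j=1..d. 1 / real j)"

definition gpot :: "nat \<Rightarrow> nat \<Rightarrow> nat \<Rightarrow> real" where
  "gpot n L d = 4 / kappa * (real L * real d + 2 * real n / real L * Hn d)"

definition dd :: "nat \<Rightarrow> nat set \<Rightarrow> nat" where "dd n x = n - card x"

lemma Hn_Suc: "Hn (Suc d) = Hn d + 1 / real (Suc d)"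
  by (simp add: Hn_def)

lemma Hn_nonneg: "Hn d \<ge> 0" by (simp add: Hn_def sum_nonneg)

lemma Hn_mono: "d \<le> d' \<Longrightarrow> Hn d \<le> Hn d'"
  unfolding Hn_def by (intro sum_mono2) auto

lemma gpot_nonneg: "gpot n L d \<ge> 0"
  using kappa_pos Hn_nonneg[of d] by (simp add: gpot_def)

lemma gpot_mono: "d \<le> d' \<Longrightarrow> gpot n L d \<le> gpot n L d'"
  unfolding gpot_def using kappa_pos Hn_mono[of d d']
  by (intro mult_left_mono add_mono mult_left_mono) (auto intro: mult_left_mono)

lemma gpot_0[simp]: "gpot n L 0 = 0" by (simp add: gpot_def Hn_def)

lemma gpot_Suc: "gpot n L (Suc d) = gpot n L d + 4 / kappa * (real L + 2 * real n / (real L * real (Suc d)))"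
proof -
  have e1: "2 * real n / real L * (1 / real (Suc d)) = 2 * real n / (real L * real (Suc d))"
    by simp
  have "real L * real (Suc d) + 2 * real n / real L * Hn (Suc d) =
        (real L * real d + 2 * real n / real L * Hn d) + (real L + 2 * real n / real L * (1 / real (Suc d)))"
    unfolding Hn_Suc distrib_left by (simp add: algebra_simps)
  then have "real L * real (Suc d) + 2 * real n / real L * Hn (Suc d) =
        (real L * real d + 2 * real n / real L * Hn d) + (real L + 2 * real n / (real L * real (Suc d)))"
    unfolding e1 .
  then show ?thesis unfolding gpot_def by (simp add: distrib_left)
qed

lemma dd_improve:
  assumes "x \<subseteq> {..<n}" "r \<subseteq> {..<n}" "onemax x < onemax r"
  shows "dd n r < dd n x"
proof -
  have "card r \<le> n" using card_mono[OF _ assms(2)] by simp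
  then show ?thesis using assms(3) by (simp add: dd_def onemax_def)
qed

lemma dd_mono:
  assumes "x \<subseteq> {..<n}" "r \<subseteq> {..<n}" "onemax x \<le> onemax r"
  shows "dd n r \<le> dd n x"
  using assms by (simp add: dd_def onemax_def diff_le_mono2)

lemma dd_zero: "x \<subseteq> {..<n} \<Longrightarrow> dd n x = 0 \<longleftrightarrow> x = {..<n}"
proof -
  assume x: "x \<subseteq> {..<n}"
  have "card x \<le> n" using card_mono[OF _ x] by simp
  show ?thesis
  proof
    assume "dd n x = 0"
    then have "card x = card {..<n}" using \<open>card x \<le> n\<close> by (simp add: dd_def)
    then show "x = {..<n}" using card_subset_eq[OF _ x] by simp
  qed (simp add: dd_def)
qed

lemma ga_step_ineq:
  assumes x: "x \<subseteq> {..<n}" and nopt: "x \<noteq> {..<n}" and L8: "L \<ge> 8" and Ln: "L \<le> n"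
  shows "ennreal (2 * real L) + (\<integral>\<^sup>+r. ennreal (gpot n L (dd n r)) \<partial>measure_pmf (ga_iteration n L x)) \<le> ennreal (gpot n L (dd n x))"
proof -
  define d where "d = dd n x"
  have d1: "d \<ge> 1" using dd_zero[OF x] nopt by (simp add: d_def)
  define q where "q = measure_pmf.prob (ga_iteration n L x) {r. onemax x < onemax r}"
  define a where "a = real d * real L ^ 2 / (2 * real n)"
  have n: "n \<ge> 1" using L8 Ln by simp
  have a0: "a > 0" using d1 L8 n by (simp add: a_def)
  have qlow: "q \<ge> kappa / 2 * (a / (1 + a))"
    using ga_improve[OF x L8 Ln] by (simp add: q_def a_def d_def dd_def)
  have q1: "q \<le> 1" by (simp add: q_def)
  obtain d0 where d0: "d = Suc d0" using d1 by (cases d) auto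
  have le: "(\<integral>\<^sup>+r. ennreal (gpot n L (dd n r)) \<partial>measure_pmf (ga_iteration n L x)) \<le>
        ennreal (gpot n L d0 * q + gpot n L d * (1 - q))"
    unfolding q_def
  proof (rule two_valued)
    fix r assume r: "r \<in> set_pmf (ga_iteration n L x)"
    have rs: "r \<subseteq> {..<n} \<and> onemax x \<le> onemax r" using ga_support[OF _ x r] L8 by simp
    show "ennreal (gpot n L (dd n r)) \<le> ennreal (if onemax x < onemax r then gpot n L d0 else gpot n L d)"
    proof (cases "onemax x < onemax r")
      case True
      then have "dd n r \<le> d0" using dd_improve[OF x _ True] rs d0 d_def by simp
      then show ?thesis using True by (simp add: gpot_mono ennreal_leI)
    next
      case False
      have "dd n r \<le> d" using dd_mono[OF x] rs d_def by simp
      then show ?thesis using False by (simp add: gpot_mono ennreal_leI)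
    qed
  qed (auto intro: gpot_nonneg)
  have diff: "gpot n L d - gpot n L d0 = 4 / kappa * (real L + 2 * real n / (real L * real d))"
    using d0 gpot_Suc[of n L d0] by simp
  have key: "q * (4 / kappa * (real L + 2 * real n / (real L * real d))) \<ge> 2 * real L"
  proof -
    have e: "real L + 2 * real n / (real L * real d) = real L * (1 + a) / a"
      using a0 d1 L8 n by (simp add: a_def field_simps power2_eq_square)
    have h1: "kappa / 2 * (4 / kappa) = 2" using kappa_pos by simp
    have h2: "a / (1 + a) * ((1 + a) / a) = 1" using a0 by simp
    have "kappa / 2 * (a / (1 + a)) * (4 / kappa * (real L * (1 + a) / a)) = (kappa / 2 * (4 / kappa)) * (a / (1 + a) * ((1 + a) / a)) * real L"
      by (simp only: times_divide_eq_right[symmetric] mult_ac)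
    then have "kappa / 2 * (a / (1 + a)) * (4 / kappa * (real L + 2 * real n / (real L * real d))) = 2 * real L"
      unfolding e using h1 h2 by simp
    moreover have "kappa / 2 * (a / (1 + a)) * (4 / kappa * (real L + 2 * real n / (real L * real d))) \<le>
          q * (4 / kappa * (real L + 2 * real n / (real L * real d)))"
      using qlow kappa_pos by (intro mult_right_mono) auto
    ultimately show ?thesis by simp
  qed
  have "ennreal (2 * real L) + (\<integral>\<^sup>+r. ennreal (gpot n L (dd n r)) \<partial>measure_pmf (ga_iteration n L x))
      \<le> ennreal (2 * real L) + ennreal (gpot n L d0 * q + gpot n L d * (1 - q))"
    using le by (rule add_left_mono)
  also have "\<dots> = ennreal (2 * real L + (gpot n L d0 * q + gpot n L d * (1 - q)))"
    using gpot_nonneg[of n L d0] gpot_nonneg[of n L d] q1 measure_nonneg[of _ "{r. onemax x < onemax r}"]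
    by (subst ennreal_plus) (auto simp: q_def)
  also have "\<dots> \<le> ennreal (gpot n L d)"
  proof (rule ennreal_leI)
    have "gpot n L d0 * q + gpot n L d * (1 - q) = gpot n L d - q * (gpot n L d - gpot n L d0)"
      by (simp add: algebra_simps)
    then show "2 * real L + (gpot n L d0 * q + gpot n L d * (1 - q)) \<le> gpot n L d"
      using key diff by simp
  qed
  finally show ?thesis by (simp add: d_def)
qed

definition mm :: "nat \<Rightarrow> nat \<Rightarrow> nat \<Rightarrow> real" where
  "mm n k i = min (exp 1 * real n / real i) (real k)"
definition SM :: "nat \<Rightarrow> nat \<Rightarrow> nat \<Rightarrow> real" where
  "SM n k j = (\<Sum>i=1..j. mm n k i)"
definition rr :: "nat \<Rightarrow> nat \<Rightarrow> real" where
  "rr n d = 1 - real d / (exp 1 * real n)"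
fun MM :: "nat \<Rightarrow> nat \<Rightarrow> nat \<Rightarrow> nat \<Rightarrow> real" where
  "MM n L k 0 = 0"
| "MM n L k (Suc j) = MM n L k j + rr n (Suc j) ^ k * (gpot n L (Suc j) - MM n L k j)"

definition phi :: "nat \<Rightarrow> nat \<Rightarrow> nat \<Rightarrow> state \<Rightarrow> real" where
  "phi n L k s = (case s of GA x \<Rightarrow> gpot n L (dd n x)
     | EA x c \<Rightarrow> min (exp 1 * real n / real (dd n x)) (real (k - min c (k - 1)))
                 + SM n k (dd n x - 1) + MM n L k (dd n x - 1)
                 + rr n (dd n x) ^ (k - min c (k - 1)) * (gpot n L (dd n x) - MM n L k (dd n x - 1)))"

lemma mm_nonneg: "mm n k i \<ge> 0" by (simp add: mm_def)

lemma SM_nonneg: "SM n k j \<ge> 0" by (simp add: SM_def sum_nonneg mm_nonneg)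

lemma SM_Suc: "SM n k (Suc j) = SM n k j + mm n k (Suc j)" by (simp add: SM_def)

lemma SM_mono: "j \<le> j' \<Longrightarrow> SM n k j \<le> SM n k j'"
  unfolding SM_def by (intro sum_mono2) (auto simp: mm_nonneg)

lemma rr_bounds: "j \<le> n \<Longrightarrow> 0 \<le> rr n j \<and> rr n j \<le> 1"
proof -
  assume j: "j \<le> n"
  have "real j \<le> exp 1 * real n"
  proof -
    have "real j \<le> 1 * real n" using j by simp
    also have "\<dots> \<le> exp 1 * real n" by (intro mult_right_mono) auto
    finally show ?thesis .
  qed
  then show ?thesis by (cases "n = 0") (auto simp: rr_def field_simps)
qed

lemma MM_props: "j \<le> n \<Longrightarrow> 0 \<le> MM n L k j \<and> MM n L k j \<le> gpot n L j"
proof (induction j)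
  case 0 then show ?case by simp
next
  case (Suc j)
  then have IH: "0 \<le> MM n L k j" "MM n L k j \<le> gpot n L j" by auto
  have r: "0 \<le> rr n (Suc j) ^ k" "rr n (Suc j) ^ k \<le> 1"
    using rr_bounds[OF Suc.prems] by (auto intro: power_le_one)
  have g: "gpot n L j \<le> gpot n L (Suc j)" by (rule gpot_mono) simp
  have "MM n L k (Suc j) = (1 - rr n (Suc j) ^ k) * MM n L k j + rr n (Suc j) ^ k * gpot n L (Suc j)"
    by (simp add: algebra_simps)
  moreover have "(1 - rr n (Suc j) ^ k) * MM n L k j \<le> (1 - rr n (Suc j) ^ k) * gpot n L (Suc j)"
    using IH g r by (intro mult_left_mono) auto
  moreover have "0 \<le> (1 - rr n (Suc j) ^ k) * MM n L k j" using IH r by simp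
  moreover have "0 \<le> rr n (Suc j) ^ k * gpot n L (Suc j)" using r gpot_nonneg by simp
  ultimately show ?case by (simp add: algebra_simps)
qed

lemma MM_step_mono: "Suc j \<le> n \<Longrightarrow> MM n L k j \<le> MM n L k (Suc j)"
proof -
  assume j: "Suc j \<le> n"
  have "MM n L k j \<le> gpot n L j" using MM_props[of j n] j by simp
  also have "\<dots> \<le> gpot n L (Suc j)" by (rule gpot_mono) simp
  finally have "0 \<le> gpot n L (Suc j) - MM n L k j" by simp
  moreover have "0 \<le> rr n (Suc j) ^ k" using rr_bounds[OF j] by simp
  ultimately show ?thesis by simp
qed

lemma MM_mono: "j \<le> j' \<Longrightarrow> j' \<le> n \<Longrightarrow> MM n L k j \<le> MM n L k j'"
proof (induction j' rule: dec_induct)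
  case base then show ?case by simp
next
  case (step m)
  then show ?case using MM_step_mono[of m n L k] by simp
qed

lemma phi_EA0:
  assumes "dd n x \<le> n"
  shows "phi n L k (EA x 0) = SM n k (dd n x) + MM n L k (dd n x)"
proof (cases "dd n x")
  case 0 then show ?thesis by (simp add: phi_def SM_def rr_def)
next
  case (Suc d0)
  then show ?thesis by (simp add: phi_def SM_Suc mm_def)
qed

lemma phi_nonneg:
  assumes "dd n (cur s) \<le> n" "k \<ge> 1"
  shows "phi n L k s \<ge> 0"
proof (cases s)
  case (EA x c)
  define d where "d = dd n x"
  have d: "d \<le> n" using assms EA by (simp add: d_def)
  have "MM n L k (d - 1) \<le> gpot n L (d - 1)" using MM_props[of "d - 1" n] d by simp
  also have "\<dots> \<le> gpot n L d" by (rule gpot_mono) simp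
  finally have "0 \<le> gpot n L d - MM n L k (d - 1)" by simp
  moreover have "0 \<le> rr n d ^ (k - min c (k - 1))" using rr_bounds[OF d] by simp
  moreover have "0 \<le> MM n L k (d - 1)" using MM_props[of "d - 1" n] d by simp
  moreover have "0 \<le> min (exp 1 * real n / real d) (real (k - min c (k - 1)))" by simp
  ultimately show ?thesis using EA SM_nonneg[of n k "d - 1"] by (simp add: phi_def d_def[symmetric])
next
  case (GA x)
  then show ?thesis by (simp add: phi_def gpot_nonneg)
qed

lemma ea_real_case1:
  fixes q r S M g u :: real
  assumes "1 - r \<le> q" "q \<le> 1" "0 \<le> q" "0 \<le> S" "M \<le> g" "1 \<le> u"
  shows "1 + (S + M) * q + g * (1 - q) \<le> min u 1 + S + M + r * (g - M)"
proof -
  have "(1 - q) * (g - M) \<le> r * (g - M)" using assms by (intro mult_right_mono) auto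
  moreover have "S * q \<le> S" using assms by (simp add: mult_left_le)
  ultimately show ?thesis using assms by (simp add: algebra_simps)
qed

lemma ea_real_case2:
  fixes q r S M g u w :: real
  assumes "1 \<le> q * u" "q \<le> 1" "0 \<le> q" "1 - q \<le> r" "0 \<le> r" "M \<le> g" "0 \<le> w" "0 \<le> u"
  shows "1 + (S + M) * q + (min u w + S + M + r ^ m * (g - M)) * (1 - q) \<le> min u (w + 1) + S + M + r ^ Suc m * (g - M)"
proof -
  have i: "1 + (1 - q) * min u w \<le> min u (w + 1)"
  proof (cases "u \<le> w")
    case True
    then have "1 + (1 - q) * u \<le> u" using assms by (simp add: algebra_simps)
    then show ?thesis using True by simp
  next
    case False
    have a: "1 + (1 - q) * u \<le> u" using assms by (simp add: algebra_simps)
    have b: "(1 - q) * w \<le> (1 - q) * u" using False assms by (intro mult_left_mono) auto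
    have c: "(1 - q) * w \<le> w" using assms by (simp add: mult_left_le_one_le)
    show ?thesis using False a b c by simp
  qed
  have ii: "(1 - q) * (r ^ m * (g - M)) \<le> r ^ Suc m * (g - M)"
  proof -
    have "(1 - q) * (r ^ m * (g - M)) \<le> r * (r ^ m * (g - M))"
      using assms by (intro mult_right_mono) auto
    then show ?thesis by (simp add: algebra_simps)
  qed
  have "1 + (S + M) * q + (min u w + S + M + r ^ m * (g - M)) * (1 - q) =
        (1 + (1 - q) * min u w) + S + M + (1 - q) * (r ^ m * (g - M))"
    by (simp add: algebra_simps)
  also have "\<dots> \<le> min u (w + 1) + S + M + r ^ Suc m * (g - M)" using i ii by linarith
  finally show ?thesis .
qed

lemma phi_EA_eq: "phi n L k (EA x c) = min (exp 1 * real n / real (dd n x)) (real (k - min c (k - 1)))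
                 + SM n k (dd n x - 1) + MM n L k (dd n x - 1)
                 + rr n (dd n x) ^ (k - min c (k - 1)) * (gpot n L (dd n x) - MM n L k (dd n x - 1))"
  by (simp add: phi_def)

lemma ea_step_ineq:
  assumes x: "x \<subseteq> {..<n}" and nopt: "x \<noteq> {..<n}" and k: "k \<ge> 1"
  shows "ennreal 1 + (\<integral>\<^sup>+s'. ennreal (phi n L k s') \<partial>measure_pmf (ea_step n k x c)) \<le> ennreal (phi n L k (EA x c))"
proof -
  define d where "d = dd n x"
  have n: "n \<ge> 1" using nopt x by (cases n) auto
  have d1: "d \<ge> 1" using dd_zero[OF x] nopt by (simp add: d_def)
  have dn: "d \<le> n" by (simp add: d_def dd_def)
  define q where "q = measure_pmf.prob (ea_mutation n x) {y. onemax x < onemax y}"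
  have qlow: "q \<ge> real d / (exp 1 * real n)"
    using ea_improve[OF x n] by (simp add: q_def d_def dd_def)
  have q01: "0 \<le> q" "q \<le> 1" by (auto simp: q_def)
  define S where "S = SM n k (d - 1)"
  define M where "M = MM n L k (d - 1)"
  define g where "g = gpot n L d"
  define r where "r = rr n d"
  define u where "u = exp 1 * real n / real d"
  have S0: "S \<ge> 0" by (simp add: S_def SM_nonneg)
  have M0: "M \<ge> 0" and Mg: "M \<le> g"
  proof -
    have "M \<le> gpot n L (d - 1)" "0 \<le> M" using MM_props[of "d - 1" n L k] dn by (auto simp: M_def)
    moreover have "gpot n L (d - 1) \<le> g" unfolding g_def by (rule gpot_mono) simp
    ultimately show "M \<ge> 0" "M \<le> g" by auto
  qed
  have r01: "0 \<le> r" "r \<le> 1" using rr_bounds[OF dn] by (auto simp: r_def)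
  have rq: "1 - q \<le> r" using qlow by (simp add: r_def rr_def)
  have u1: "u \<ge> 1"
  proof -
    have "real d \<le> 1 * real n" using dn by simp
    also have "\<dots> \<le> exp 1 * real n" by (intro mult_right_mono) auto
    finally show ?thesis using d1 by (simp add: u_def field_simps)
  qed
  have qu: "q * u \<ge> 1"
  proof -
    have "real d / (exp 1 * real n) * u = 1" using d1 n by (simp add: u_def field_simps)
    moreover have "real d / (exp 1 * real n) * u \<le> q * u" using qlow u1 by (intro mult_right_mono) auto
    ultimately show ?thesis by linarith
  qed
  define A where "A = S + M"
  define B where "B = (if Suc c \<ge> k then g else min u (real (k - Suc c)) + S + M + r ^ (k - Suc c) * (g - M))"
  have A0: "A \<ge> 0" using S0 M0 by (simp add: A_def)
  have B0: "B \<ge> 0"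
  proof -
    have "0 \<le> r ^ (k - Suc c) * (g - M)" using r01 Mg by simp
    moreover have "0 \<le> g" using M0 Mg by simp
    moreover have "0 \<le> min u (real (k - Suc c))" using u1 by simp
    ultimately show ?thesis using S0 M0 by (simp add: B_def)
  qed
  define h where "h y = (if onemax y > onemax x then EA y 0
        else (let x' = (if onemax y \<ge> onemax x then y else x)
              in if Suc c \<ge> k then GA x' else EA x' (Suc c)))" for y
  have step_eq: "ea_step n k x c = map_pmf h (ea_mutation n x)"
    unfolding ea_step_def h_def ..
  have le: "(\<integral>\<^sup>+y. ennreal (phi n L k (h y)) \<partial>measure_pmf (ea_mutation n x)) \<le> ennreal (A * q + B * (1 - q))"
    unfolding q_def
  proof (rule two_valued[OF _ A0 B0])
    fix y assume y: "y \<in> set_pmf (ea_mutation n x)"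
    have ys: "y \<subseteq> {..<n}" by (rule ea_mutation_support[OF x y])
    show "ennreal (phi n L k (h y)) \<le> ennreal (if onemax x < onemax y then A else B)"
    proof (cases "onemax x < onemax y")
      case True
      have dy: "dd n y < d" using dd_improve[OF x ys True] by (simp add: d_def)
      have dyn: "dd n y \<le> n" by (simp add: dd_def)
      have "phi n L k (h y) = SM n k (dd n y) + MM n L k (dd n y)"
        using True phi_EA0[OF dyn] by (simp add: h_def)
      also have "\<dots> \<le> A"
        unfolding A_def S_def M_def using dy dn by (intro add_mono SM_mono MM_mono) auto
      finally show ?thesis using True by (simp add: ennreal_leI)
    next
      case False
      define x' where "x' = (if onemax y \<ge> onemax x then y else x)"
      have dx': "dd n x' = d" using False by (auto simp: x'_def d_def dd_def onemax_def)
      have hy: "h y = (if Suc c \<ge> k then GA x' else EA x' (Suc c))"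
        using False by (simp add: h_def x'_def Let_def)
      have "phi n L k (h y) = B"
      proof (cases "Suc c \<ge> k")
        case True
        then show ?thesis using dx' by (simp add: hy phi_def B_def g_def)
      next
        case False2: False
        then have mc: "min (Suc c) (k - 1) = Suc c" by simp
        show ?thesis using False2 dx'
          by (simp add: hy phi_def B_def g_def mc S_def M_def r_def u_def)
      qed
      then show ?thesis using False by simp
    qed
  qed
  have main: "1 + (A * q + B * (1 - q)) \<le> phi n L k (EA x c)"
  proof (cases "Suc c \<ge> k")
    case True
    then have mc: "k - min c (k - 1) = 1" using k by simp
    have "phi n L k (EA x c) = min u 1 + S + M + r * (g - M)"
      unfolding phi_EA_eq mc d_def[symmetric] S_def M_def r_def g_def u_def by simp
    moreover have "1 + (S + M) * q + g * (1 - q) \<le> min u 1 + S + M + r * (g - M)"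
      by (rule ea_real_case1) (use rq q01 S0 Mg u1 in auto)
    ultimately show ?thesis using True by (simp add: A_def B_def)
  next
    case False
    then have mc: "min c (k - 1) = c" by simp
    have kc: "k - c = Suc (k - Suc c)" using False by simp
    have "phi n L k (EA x c) = min u (real (k - Suc c) + 1) + S + M + r ^ Suc (k - Suc c) * (g - M)"
      unfolding phi_EA_eq mc kc d_def[symmetric] S_def M_def r_def g_def u_def by simp
    moreover have "1 + (S + M) * q + (min u (real (k - Suc c)) + S + M + r ^ (k - Suc c) * (g - M)) * (1 - q)
        \<le> min u (real (k - Suc c) + 1) + S + M + r ^ Suc (k - Suc c) * (g - M)"
      by (rule ea_real_case2) (use qu q01 rq r01 Mg u1 in auto)
    ultimately show ?thesis using False by (simp add: A_def B_def)
  qed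
  have "ennreal 1 + (\<integral>\<^sup>+s'. ennreal (phi n L k s') \<partial>measure_pmf (ea_step n k x c))
      = ennreal 1 + (\<integral>\<^sup>+y. ennreal (phi n L k (h y)) \<partial>measure_pmf (ea_mutation n x))"
    by (simp add: step_eq)
  also have "\<dots> \<le> ennreal 1 + ennreal (A * q + B * (1 - q))" using le by (rule add_left_mono)
  also have "\<dots> = ennreal (1 + (A * q + B * (1 - q)))"
    using A0 B0 q01 by (subst ennreal_plus) auto
  also have "\<dots> \<le> ennreal (phi n L k (EA x c))" using main by (rule ennreal_leI)
  finally show ?thesis .
qed

lemma init_support:
  assumes "s \<in> set_pmf (init n)" shows "\<exists>x. x \<subseteq> {..<n} \<and> s = EA x 0"
proof -
  have e: "set_pmf (pmf_of_set (Pow {..<n})) = Pow {..<n}" by (rule set_pmf_of_set) auto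
  from assms obtain x where "x \<in> set_pmf (pmf_of_set (Pow {..<n}))" "s = EA x 0"
    unfolding init_def set_map_pmf by blast
  then show ?thesis using e by blast
qed

lemma step_opt: "cur s = {..<n} \<Longrightarrow> step n L k s = return_pmf s"
  by (simp add: step_def)
lemma step_EA: "x \<noteq> {..<n} \<Longrightarrow> step n L k (EA x c) = ea_step n k x c"
  by (simp add: step_def)
lemma step_GA: "x \<noteq> {..<n} \<Longrightarrow> step n L k (GA x) = map_pmf GA (ga_iteration n L x)"
  by (simp add: step_def)
lemma cost_opt: "cur s = {..<n} \<Longrightarrow> cost n L s = 0"
  by (simp add: cost_def)
lemma cost_EA: "x \<noteq> {..<n} \<Longrightarrow> cost n L (EA x c) = 1"
  by (simp add: cost_def)
lemma cost_GA: "x \<noteq> {..<n} \<Longrightarrow> cost n L (GA x) = 2 * L"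
  by (simp add: cost_def)

lemma step_support:
  assumes s: "cur s \<subseteq> {..<n}" and L: "L \<ge> 1" and s': "s' \<in> set_pmf (step n L k s)"
  shows "cur s' \<subseteq> {..<n}"
proof (cases "cur s = {..<n}")
  case True then show ?thesis using s' by (simp add: step_opt)
next
  case False
  show ?thesis
  proof (cases s)
    case (EA x c)
    then have x: "x \<subseteq> {..<n}" using s by simp
    have "s' \<in> set_pmf (ea_step n k x c)" using s' False EA by (simp add: step_EA)
    then obtain y where y: "y \<in> set_pmf (ea_mutation n x)"
      and s'eq: "s' = (if onemax y > onemax x then EA y 0
        else (let x' = (if onemax y \<ge> onemax x then y else x)
              in if Suc c \<ge> k then GA x' else EA x' (Suc c)))"
      unfolding ea_step_def set_map_pmf by blast
    have "y \<subseteq> {..<n}" by (rule ea_mutation_support[OF x y])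
    then show ?thesis using s'eq x by (simp add: Let_def)
  next
    case (GA x)
    then have x: "x \<subseteq> {..<n}" using s by simp
    have "s' \<in> set_pmf (map_pmf GA (ga_iteration n L x))" using s' False GA by (simp add: step_GA)
    then obtain r where r: "r \<in> set_pmf (ga_iteration n L x)" and s'eq: "s' = GA r"
      unfolding set_map_pmf by blast
    show ?thesis using ga_support[OF L x r] s'eq by simp
  qed
qed

lemma expected_bound:
  assumes L8: "L \<ge> 8" and Ln: "L \<le> n" and k: "k \<ge> 1"
  shows "expected_evals n L k \<le> ennreal (1 + SM n k n + MM n L k n)"
proof -
  define S where "S = {s. cur s \<subseteq> {..<n}}"
  define \<Phi> where "\<Phi> s = ennreal (phi n L k s)" for s
  have L1: "L \<ge> 1" using L8 by simp
  have sum: "(\<Sum>t. \<integral>\<^sup>+ s. ennreal (real (cost n L s)) \<partial>measure_pmf (dist n L k t)) \<le> (\<integral>\<^sup>+ s. \<Phi> s \<partial>measure_pmf (init n))"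
  proof (rule drift)
    fix s assume "s \<in> S"
    then show "set_pmf (step n L k s) \<subseteq> S" using step_support[OF _ L1] unfolding S_def by blast
  next
    show "set_pmf (init n) \<subseteq> S" using init_support unfolding S_def by fastforce
  next
    fix s assume sS: "s \<in> S"
    show "ennreal (real (cost n L s)) + (\<integral>\<^sup>+ s'. \<Phi> s' \<partial>measure_pmf (step n L k s)) \<le> \<Phi> s"
    proof (cases "cur s = {..<n}")
      case True
      then show ?thesis by (simp add: step_opt cost_opt)
    next
      case False
      show ?thesis
      proof (cases s)
        case (EA x c)
        have x: "x \<subseteq> {..<n}" using sS EA by (simp add: S_def)
        have nopt: "x \<noteq> {..<n}" using False EA by simp
        have "ennreal 1 + (\<integral>\<^sup>+s'. ennreal (phi n L k s') \<partial>measure_pmf (ea_step n k x c)) \<le> ennreal (phi n L k (EA x c))"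
          by (rule ea_step_ineq[OF x nopt k])
        then show ?thesis using EA nopt by (simp add: step_EA cost_EA \<Phi>_def)
      next
        case (GA x)
        have x: "x \<subseteq> {..<n}" using sS GA by (simp add: S_def)
        have nopt: "x \<noteq> {..<n}" using False GA by simp
        have "ennreal (2 * real L) + (\<integral>\<^sup>+r. ennreal (gpot n L (dd n r)) \<partial>measure_pmf (ga_iteration n L x)) \<le> ennreal (gpot n L (dd n x))"
          by (rule ga_step_ineq[OF x nopt L8 Ln])
        moreover have "\<And>r. phi n L k (GA r) = gpot n L (dd n r)" by (simp add: phi_def)
        ultimately show ?thesis using GA nopt by (simp add: step_GA cost_GA \<Phi>_def)
      qed
    qed
  qed
  have ini: "(\<integral>\<^sup>+ s. \<Phi> s \<partial>measure_pmf (init n)) \<le> (\<integral>\<^sup>+ s. ennreal (SM n k n + MM n L k n) \<partial>measure_pmf (init n))"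
  proof (intro nn_integral_mono_AE)
    show "AE s in measure_pmf (init n). \<Phi> s \<le> ennreal (SM n k n + MM n L k n)"
    proof (unfold AE_measure_pmf_iff, intro ballI)
      fix s assume "s \<in> set_pmf (init n)"
      then obtain x where x: "x \<subseteq> {..<n}" "s = EA x 0" using init_support by blast
      have dn: "dd n x \<le> n" by (simp add: dd_def)
      have "phi n L k s = SM n k (dd n x) + MM n L k (dd n x)" using phi_EA0[OF dn] x by simp
      also have "\<dots> \<le> SM n k n + MM n L k n" using dn by (intro add_mono SM_mono MM_mono) auto
      finally show "\<Phi> s \<le> ennreal (SM n k n + MM n L k n)" by (simp add: \<Phi>_def ennreal_leI)
    qed
  qed
  have pos: "0 \<le> SM n k n + MM n L k n" using SM_nonneg[of n k n] MM_props[of n n L k] by simp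
  have "(\<integral>\<^sup>+ s. ennreal (SM n k n + MM n L k n) \<partial>measure_pmf (init n)) = ennreal (SM n k n + MM n L k n)"
    by simp
  then have "(\<Sum>t. \<integral>\<^sup>+ s. ennreal (real (cost n L s)) \<partial>measure_pmf (dist n L k t)) \<le> ennreal (SM n k n + MM n L k n)"
    using order_trans[OF sum ini] by simp
  then have "expected_evals n L k \<le> 1 + ennreal (SM n k n + MM n L k n)"
    unfolding expected_evals_def by (rule add_left_mono)
  also have "\<dots> = ennreal (1 + SM n k n + MM n L k n)" using pos by (simp add: ennreal_plus add.assoc)
  finally show ?thesis .
qed

lemma harm_tail:
  assumes J: "1 \<le> J" "J \<le> N"
  shows "(\<Sum>i\<in>{J<..N}. 1 / real i) \<le> ln (real N) - ln (real J)"
  using J(2)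
proof (induction N rule: dec_induct)
  case base then show ?case by simp
next
  case (step m)
  have m1: "m \<ge> 1" using J step by simp
  have "1 / real (Suc m) \<le> ln (real (Suc m)) - ln (real m)"
  proof -
    have "ln (real m / real (Suc m)) \<le> real m / real (Suc m) - 1"
      using m1 by (intro ln_le_minus_one) auto
    moreover have "real m / real (Suc m) - 1 = - (1 / real (Suc m))" by (simp add: field_simps)
    moreover have "ln (real m / real (Suc m)) = ln (real m) - ln (real (Suc m))"
      using m1 by (simp add: ln_div)
    ultimately show ?thesis by linarith
  qed
  moreover have "{J<..Suc m} = insert (Suc m) {J<..m}" using step by auto
  ultimately show ?case using step by simp
qed

lemma Hn_le: "d \<ge> 1 \<Longrightarrow> Hn d \<le> 1 + ln (real d)"
proof -
  assume d: "d \<ge> 1"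
  have "{1..d} = insert 1 {1<..d}" using d by auto
  then have "Hn d = 1 + (\<Sum>i\<in>{1<..d}. 1 / real i)" by (simp add: Hn_def)
  also have "\<dots> \<le> 1 + (ln (real d) - ln 1)" using harm_tail[of 1 d] d by simp
  finally show ?thesis by simp
qed

lemma Hn_le_n: "d \<le> n \<Longrightarrow> n \<ge> 1 \<Longrightarrow> Hn d \<le> 1 + ln (real n)"
proof -
  assume "d \<le> n" "n \<ge> 1"
  then have "Hn d \<le> Hn n" using Hn_mono by blast
  also have "\<dots> \<le> 1 + ln (real n)" using Hn_le \<open>n \<ge> 1\<close> by simp
  finally show ?thesis .
qed

lemma SM_bound:
  assumes k3: "k \<ge> 3" and k2: "2 * real k \<le> exp 1 * real n"
  shows "SM n k n \<le> exp 1 * real n * (1 + ln (2 * real k))"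
proof -
  define t where "t = exp 1 * real n / real k"
  define J where "J = nat \<lfloor>t\<rfloor>"
  have kpos: "real k > 0" using k3 by simp
  have t2: "t \<ge> 2" using k2 kpos by (simp add: t_def field_simps)
  have n1: "n \<ge> 1" using k2 k3 by (cases n) auto
  have Jt: "real J \<le> t" "t < real J + 1" using t2 by (auto simp: J_def)
  have J1: "J \<ge> 1" using Jt t2 by linarith
  have tn: "t \<le> real n"
  proof -
    have "exp 1 * real n \<le> 3 * real n" using exp_le by (intro mult_right_mono) auto
    also have "\<dots> \<le> real k * real n" using k3 by (intro mult_right_mono) auto
    finally show ?thesis using kpos by (simp add: t_def field_simps)
  qed
  have Jn: "J \<le> n" using Jt tn by linarith
  have Jlow: "real J \<ge> t / 2" using Jt t2 by linarith
  have split: "{1..n} = {1..J} \<union> {J<..n}" using J1 Jn by auto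
  have "SM n k n = (\<Sum>i\<in>{1..J}. mm n k i) + (\<Sum>i\<in>{J<..n}. mm n k i)"
    unfolding SM_def split by (rule sum.union_disjoint) auto
  also have "(\<Sum>i\<in>{1..J}. mm n k i) \<le> (\<Sum>i\<in>{1..J}. real k)"
    by (intro sum_mono) (simp add: mm_def)
  also have "(\<Sum>i\<in>{1..J}. real k) = real J * real k" by simp
  also have "\<dots> \<le> exp 1 * real n" using Jt kpos by (simp add: t_def field_simps)
  also have "(\<Sum>i\<in>{J<..n}. mm n k i) \<le> (\<Sum>i\<in>{J<..n}. exp 1 * real n * (1 / real i))"
    by (intro sum_mono) (simp add: mm_def)
  also have "\<dots> = exp 1 * real n * (\<Sum>i\<in>{J<..n}. 1 / real i)" by (simp add: sum_distrib_left)
  also have "\<dots> \<le> exp 1 * real n * (ln (real n) - ln (real J))"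
    using harm_tail[OF J1 Jn] by (intro mult_left_mono) auto
  also have "ln (real n) - ln (real J) \<le> ln (2 * real k)"
  proof -
    have "ln (t / 2) \<le> ln (real J)" using Jlow t2 by simp
    moreover have "ln (t / 2) = 1 + ln (real n) - ln (2 * real k)"
      using n1 kpos by (simp add: t_def ln_div ln_mult)
    ultimately show ?thesis by simp
  qed
  then have "exp 1 * real n * (ln (real n) - ln (real J)) \<le> exp 1 * real n * ln (2 * real k)"
    by (intro mult_left_mono) auto
  finally show ?thesis by (simp add: algebra_simps)
qed

lemma MM_bound:
  assumes i0: "i0 \<le> n" and j: "j \<le> n"
  shows "MM n L k j \<le> gpot n L i0 + real j * rr n i0 ^ k * gpot n L j"
  using j
proof (induction j)
  case 0 then show ?case by (simp add: gpot_nonneg)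
next
  case (Suc j)
  have r0: "0 \<le> rr n i0" using rr_bounds[OF i0] by simp
  show ?case
  proof (cases "Suc j \<le> i0")
    case True
    have "MM n L k (Suc j) \<le> gpot n L (Suc j)" using MM_props[OF Suc.prems] by simp
    also have "\<dots> \<le> gpot n L i0" using True by (rule gpot_mono)
    finally show ?thesis using r0 gpot_nonneg[of n L "Suc j"] by (simp add: add_increasing2)
  next
    case False
    have IH: "MM n L k j \<le> gpot n L i0 + real j * rr n i0 ^ k * gpot n L j" using Suc by simp
    have M0: "0 \<le> MM n L k j" using MM_props[of j n L k] Suc.prems by simp
    have rs: "0 \<le> rr n (Suc j)" using rr_bounds[OF Suc.prems] by simp
    have rle: "rr n (Suc j) \<le> rr n i0" using False n_not_Suc_n by (simp add: rr_def divide_right_mono)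
    have "MM n L k (Suc j) \<le> MM n L k j + rr n (Suc j) ^ k * gpot n L (Suc j)"
      using M0 rs by (simp add: mult_left_mono)
    also have "rr n (Suc j) ^ k * gpot n L (Suc j) \<le> rr n i0 ^ k * gpot n L (Suc j)"
      using rs rle gpot_nonneg by (intro mult_right_mono power_mono) auto
    also have "real j * rr n i0 ^ k * gpot n L j \<le> real j * rr n i0 ^ k * gpot n L (Suc j)"
      using r0 by (intro mult_left_mono gpot_mono) auto
    then have "MM n L k j \<le> gpot n L i0 + real j * rr n i0 ^ k * gpot n L (Suc j)" using IH by linarith
    finally show ?thesis by (simp add: algebra_simps)
  qed
qed

definition Kc :: "real \<Rightarrow> real \<Rightarrow> real \<Rightarrow> real" where
  "Kc c1 c3 C = 3 * exp 1 + 1 + exp 1 * \<bar>ln (2 * C)\<bar> + 4 / kappa * (2 * exp 1 / c3 + 2 + 8 / c1)"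

lemma final_concrete:
  fixes n L k :: nat and c1 c3 C :: real
  assumes c1: "c1 > 0" and c3: "c3 > 0" and C: "C > 0"
    and L8: "L \<ge> 8" and Ln: "L \<le> n" and k3: "k \<ge> 3"
    and lnn: "ln (real n) \<ge> 1" and lln: "ln (ln (real n)) \<ge> 1"
    and hL: "c1 * ln (real n) \<le> real L"
    and hk: "c3 * real L * ln (real n) \<le> real k"
    and hkC: "real k \<le> C * (ln (real n))\<^sup>2"
    and hk2: "2 * real k \<le> exp 1 * real n"
    and hi0: "exp 1 * real n * ln (real n * real L) / real k + 1 \<le> real n"
  shows "1 + SM n k n + MM n L k n \<le> Kc c1 c3 C * real n * ln (ln (real n))"
proof -
  define N where "N = real n"
  define Lf where "Lf = ln (ln (real n))"
  define t where "t = exp 1 * real n * ln (real n * real L) / real k"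
  define i0 where "i0 = nat \<lceil>t\<rceil>"
  have n1: "n \<ge> 1" using L8 Ln by simp
  have N1: "N \<ge> 1" using n1 by (simp add: N_def)
  have Lpos: "real L > 0" using L8 by simp
  have kpos: "real k > 0" using k3 by simp
  have lnpos: "ln (real n) > 0" using lnn by simp
  have lnnL: "ln (real n * real L) \<le> 2 * ln (real n)"
  proof -
    have "ln (real n * real L) = ln (real n) + ln (real L)" using n1 Lpos by (simp add: ln_mult)
    moreover have "ln (real L) \<le> ln (real n)" using Ln Lpos by simp
    ultimately show ?thesis by simp
  qed
  have "real n * real L \<ge> 1" using n1 L8 by (metis le_add2 le_add_same_cancel2 mult_le_mono numeral_le_iff of_nat_1 of_nat_le_iff of_nat_mult one_le_numeral order_trans semiring_norm(69) mult_1)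
  then have lnL0: "ln (real n * real L) \<ge> 0" by simp
  have t0: "t \<ge> 0" using n1 lnL0 kpos by (simp add: t_def)
  have i0t: "real i0 \<ge> t" "real i0 < t + 1" using t0 ceiling_correct[of t] by (auto simp: i0_def)
  have i0n: "i0 \<le> n" using i0t hi0 by (simp add: t_def)
  have rrk: "rr n i0 ^ k \<le> 1 / (real n * real L)"
  proof -
    have "rr n i0 ^ k \<le> exp (- (real i0 / (exp 1 * real n))) ^ k"
    proof (rule power_mono)
      show "rr n i0 \<le> exp (- (real i0 / (exp 1 * real n)))"
        using exp_ge_add_one_self[of "- (real i0 / (exp 1 * real n))"] by (simp add: rr_def)
      show "0 \<le> rr n i0" using rr_bounds[OF i0n] by simp
    qed
    also have "\<dots> = exp (- (real i0 / (exp 1 * real n)) * real k)" by (simp add: exp_of_nat_mult[symmetric] mult.commute)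
    also have "\<dots> \<le> exp (- ln (real n * real L))"
    proof -
      have "t / (exp 1 * real n) * real k = ln (real n * real L)"
        using n1 kpos by (simp add: t_def field_simps)
      moreover have "t / (exp 1 * real n) * real k \<le> real i0 / (exp 1 * real n) * real k"
        using i0t kpos n1 by (intro mult_right_mono divide_right_mono) auto
      ultimately show ?thesis by simp
    qed
    also have "\<dots> = 1 / (real n * real L)" using n1 Lpos by (simp add: exp_minus field_simps)
    finally show ?thesis .
  qed
  have MMb: "MM n L k n \<le> gpot n L i0 + gpot n L n / real L"
  proof -
    have "MM n L k n \<le> gpot n L i0 + real n * rr n i0 ^ k * gpot n L n" by (rule MM_bound[OF i0n]) simp
    also have "real n * rr n i0 ^ k * gpot n L n \<le> real n * (1 / (real n * real L)) * gpot n L n"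
      using rrk gpot_nonneg by (intro mult_right_mono mult_left_mono) auto
    also have "real n * (1 / (real n * real L)) * gpot n L n = gpot n L n / real L" using n1 by simp
    finally show ?thesis by simp
  qed
  have HB: "2 * real n * (1 + ln (real n)) / real L \<le> 4 * N / c1"
  proof -
    have "1 + ln (real n) \<le> 2 * ln (real n)" using lnn by simp
    then have "2 * real n * (1 + ln (real n)) \<le> 2 * real n * (2 * ln (real n))" by (intro mult_left_mono) auto
    also have "\<dots> = (4 * N / c1) * (c1 * ln (real n))" using c1 by (simp add: N_def field_simps)
    also have "\<dots> \<le> (4 * N / c1) * real L" using hL c1 N1 by (intro mult_left_mono) auto
    finally show ?thesis using Lpos by (simp add: field_simps)
  qed
  have g1: "gpot n L n / real L \<le> 4 / kappa * (N + 4 * N / c1)"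
  proof -
    have e: "gpot n L n / real L = 4 / kappa * (N + 2 * real n / (real L * real L) * Hn n)"
      using Lpos by (simp add: gpot_def N_def field_simps)
    have y: "2 * real n / (real L * real L) * Hn n \<le> 2 * real n * (1 + ln (real n)) / real L"
    proof -
      have "2 * real n / (real L * real L) * Hn n \<le> 2 * real n / (real L * real L) * (1 + ln (real n))"
        using Hn_le[OF n1] by (intro mult_left_mono) auto
      also have "\<dots> = (2 * real n * (1 + ln (real n))) / (real L * real L)" by simp
      also have "\<dots> \<le> 2 * real n * (1 + ln (real n)) / real L"
      proof (rule divide_left_mono)
        show "real L \<le> real L * real L" using L8 by simp
      qed (use Lpos lnpos in auto)
      finally show ?thesis .
    qed
    have "4 / kappa * (N + 2 * real n / (real L * real L) * Hn n) \<le> 4 / kappa * (N + 4 * N / c1)"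
      using y HB kappa_pos by (intro mult_left_mono) auto
    then show ?thesis using e by simp
  qed
  have g0: "gpot n L i0 \<le> 4 / kappa * (2 * exp 1 * N / c3 + N + 4 * N / c1)"
  proof -
    have a: "real L * real i0 \<le> 2 * exp 1 * N / c3 + N"
    proof -
      have "real L * real i0 \<le> real L * (t + 1)" using i0t Lpos by (intro mult_left_mono) auto
      also have "\<dots> = real L * t + real L" by (simp add: algebra_simps)
      also have "real L * t \<le> 2 * exp 1 * N / c3"
      proof -
        have "real L * t \<le> exp 1 * real n * real L * (2 * ln (real n)) / real k"
          using lnnL n1 Lpos kpos by (simp add: t_def field_simps mult_left_mono)
        also have "\<dots> \<le> exp 1 * real n * real L * (2 * ln (real n)) / (c3 * real L * ln (real n))"
          using hk c3 Lpos lnpos n1 kpos by (intro divide_left_mono) auto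
        also have "\<dots> = 2 * exp 1 * N / c3" using Lpos lnpos c3 by (simp add: N_def field_simps)
        finally show ?thesis .
      qed
      finally show ?thesis using Ln by (simp add: N_def)
    qed
    have b: "2 * real n / real L * Hn i0 \<le> 4 * N / c1"
    proof -
      have "2 * real n / real L * Hn i0 \<le> 2 * real n / real L * (1 + ln (real n))"
        using Hn_le_n[OF i0n n1] by (intro mult_left_mono) auto
      then show ?thesis using HB by simp
    qed
    show ?thesis unfolding gpot_def using a b kappa_pos by (intro mult_left_mono) auto
  qed
  have SMb: "SM n k n \<le> exp 1 * N * (1 + ln (2 * C) + 2 * Lf)"
  proof -
    have "SM n k n \<le> exp 1 * real n * (1 + ln (2 * real k))" by (rule SM_bound[OF k3 hk2])
    also have "ln (2 * real k) \<le> ln (2 * C) + 2 * Lf"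
    proof -
      have "ln (2 * real k) \<le> ln (2 * (C * (ln (real n))\<^sup>2))" using hkC kpos by simp
      also have "\<dots> = ln (2 * C) + 2 * Lf" using C lnpos by (simp add: ln_mult ln_realpow Lf_def)
      finally show ?thesis .
    qed
    then have "exp 1 * real n * (1 + ln (2 * real k)) \<le> exp 1 * real n * (1 + (ln (2 * C) + 2 * Lf))"
      by (intro mult_left_mono) auto
    finally show ?thesis by (simp add: N_def add.assoc)
  qed
  have Lf1: "Lf \<ge> 1" using lln by (simp add: Lf_def)
  have NL: "N \<le> N * Lf" using N1 Lf1 by simp
  define K1 where "K1 = 4 / kappa * (2 * exp 1 / c3 + 2 + 8 / c1)"
  have K10: "K1 \<ge> 0" using kappa_pos c1 c3 by (simp add: K1_def)
  have G: "4 / kappa * (2 * exp 1 * N / c3 + N + 4 * N / c1) + 4 / kappa * (N + 4 * N / c1) = K1 * N"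
  proof -
    have "2 * exp 1 * N / c3 + N + 4 * N / c1 + (N + 4 * N / c1) = (2 * exp 1 / c3 + 2 + 8 / c1) * N"
      using c1 c3 by (simp add: field_simps)
    then show ?thesis unfolding K1_def by (simp only: distrib_left[symmetric] mult.assoc)
  qed
  have t1: "1 \<le> N * Lf" using N1 Lf1 NL by linarith
  have t2: "exp 1 * N * (1 + ln (2 * C) + 2 * Lf) \<le> (3 * exp 1 + exp 1 * \<bar>ln (2 * C)\<bar>) * (N * Lf)"
  proof -
    define l where "l = ln (2 * C)"
    have e1: "N * (1 + l + 2 * Lf) = N + N * l + 2 * (N * Lf)" by (simp add: algebra_simps)
    have e2: "(N * Lf) * (3 + \<bar>l\<bar>) = 3 * (N * Lf) + (N * Lf) * \<bar>l\<bar>" by (simp add: algebra_simps)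
    have a: "N * l \<le> (N * Lf) * \<bar>l\<bar>"
    proof -
      have "N * l \<le> N * \<bar>l\<bar>" using N1 by (intro mult_left_mono) auto
      also have "\<dots> \<le> (N * Lf) * \<bar>l\<bar>" using NL by (intro mult_right_mono) auto
      finally show ?thesis .
    qed
    have h: "N * (1 + l + 2 * Lf) \<le> (N * Lf) * (3 + \<bar>l\<bar>)" using e1 e2 a NL by linarith
    have "exp 1 * N * (1 + l + 2 * Lf) = exp 1 * (N * (1 + l + 2 * Lf))" by simp
    also have "\<dots> \<le> exp 1 * ((N * Lf) * (3 + \<bar>l\<bar>))" using h by (intro mult_left_mono) auto
    also have "\<dots> = (3 * exp 1 + exp 1 * \<bar>l\<bar>) * (N * Lf)" by (simp add: algebra_simps)
    finally show ?thesis by (simp add: l_def)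
  qed
  have t3: "K1 * N \<le> K1 * (N * Lf)" using NL K10 by (intro mult_left_mono) auto
  have "1 + SM n k n + MM n L k n \<le> 1 + exp 1 * N * (1 + ln (2 * C) + 2 * Lf) + (4 / kappa * (2 * exp 1 * N / c3 + N + 4 * N / c1) + 4 / kappa * (N + 4 * N / c1))"
    using SMb MMb g0 g1 by linarith
  also have "\<dots> \<le> (1 + 3 * exp 1 + exp 1 * \<bar>ln (2 * C)\<bar> + K1) * (N * Lf)"
    using t1 t2 t3 G by (simp add: algebra_simps)
  also have "\<dots> = Kc c1 c3 C * real n * ln (ln (real n))"
    by (simp add: Kc_def K1_def N_def Lf_def algebra_simps)
  finally show ?thesis .
qed

lemma ln_ev: "eventually (\<lambda>n::nat. ln (real n) \<ge> M) at_top"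
proof -
  have "filterlim (\<lambda>n::nat. ln (real n)) at_top at_top" by real_asymp
  then show ?thesis by (simp add: filterlim_at_top)
qed

lemma lnln_ev: "eventually (\<lambda>n::nat. ln (ln (real n)) \<ge> M) at_top"
proof -
  have "filterlim (\<lambda>n::nat. ln (ln (real n))) at_top at_top" by real_asymp
  then show ?thesis by (simp add: filterlim_at_top)
qed

lemma ln2_small: "(\<lambda>n::nat. ln (real n) ^ 2) \<in> o(\<lambda>n. real n)" by real_asymp

theorem theorem5p1:
  fixes lam kk :: "nat \<Rightarrow> nat"
  assumes lam_range: "\<forall>n\<ge>1. 1 \<le> lam n \<and> lam n \<le> n"
    and lam_theta: "(\<lambda>n. real (lam n)) \<in> \<Theta>(\<lambda>n. ln (real n))"
    and k_pos: "\<forall>n. 0 < kk n"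
    and k_theta: "(\<lambda>n. real (kk n)) \<in> \<Theta>(\<lambda>n. real (lam n) * ln (real n))"
  shows "\<exists>C>0. \<forall>\<^sub>F n in at_top.
           expected_evals n (lam n) (kk n) \<le> ennreal (C * real n * ln (ln (real n)))"
proof -
  from lam_theta have lO: "(\<lambda>n. real (lam n)) \<in> O(\<lambda>n. ln (real n))"
    and lOm: "(\<lambda>n. real (lam n)) \<in> \<Omega>(\<lambda>n. ln (real n))" by (auto simp: bigtheta_def)
  from k_theta have kO: "(\<lambda>n. real (kk n)) \<in> O(\<lambda>n. real (lam n) * ln (real n))"
    and kOm: "(\<lambda>n. real (kk n)) \<in> \<Omega>(\<lambda>n. real (lam n) * ln (real n))" by (auto simp: bigtheta_def)
  obtain c2 where c2: "c2 > 0" "eventually (\<lambda>n. norm (real (lam n)) \<le> c2 * norm (ln (real n))) at_top"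
    using landau_o.bigE[OF lO] by blast
  obtain c1 where c1: "c1 > 0" "eventually (\<lambda>n. norm (real (lam n)) \<ge> c1 * norm (ln (real n))) at_top"
    using landau_omega.bigE[OF lOm] by blast
  obtain c4 where c4: "c4 > 0" "eventually (\<lambda>n. norm (real (kk n)) \<le> c4 * norm (real (lam n) * ln (real n))) at_top"
    using landau_o.bigE[OF kO] by blast
  obtain c3 where c3: "c3 > 0" "eventually (\<lambda>n. norm (real (kk n)) \<ge> c3 * norm (real (lam n) * ln (real n))) at_top"
    using landau_omega.bigE[OF kOm] by blast
  define C where "C = c4 * c2"
  have Cpos: "C > 0" using c2 c4 by (simp add: C_def)
  have ev_small: "eventually (\<lambda>n. \<bar>ln (real n) ^ 2\<bar> \<le> (exp 1 / (2 * C)) * \<bar>real n\<bar>) at_top"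
    using landau_o.smallD[OF ln2_small, of "exp 1 / (2 * C)"] Cpos by simp
  have ev: "eventually (\<lambda>n. n \<ge> 3 \<and> ln (real n) \<ge> 1 \<and> ln (ln (real n)) \<ge> 1 \<and> c1 * ln (real n) \<ge> 8
      \<and> c3 * c1 * ln (real n) ^ 2 \<ge> 3 \<and> ln (real n) \<ge> 4 * exp 1 / (c1 * c3)
      \<and> \<bar>ln (real n) ^ 2\<bar> \<le> (exp 1 / (2 * C)) * \<bar>real n\<bar>
      \<and> norm (real (lam n)) \<le> c2 * norm (ln (real n))
      \<and> norm (real (lam n)) \<ge> c1 * norm (ln (real n))
      \<and> norm (real (kk n)) \<le> c4 * norm (real (lam n) * ln (real n))
      \<and> norm (real (kk n)) \<ge> c3 * norm (real (lam n) * ln (real n))) at_top"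
  proof -
    have e3: "eventually (\<lambda>n. c1 * ln (real n) \<ge> 8) at_top"
      using ln_ev[of "8 / c1"] by eventually_elim (use c1(1) in \<open>simp add: field_simps\<close>)
    have e4: "eventually (\<lambda>n. c3 * c1 * ln (real n) ^ 2 \<ge> 3) at_top"
    proof -
      have "eventually (\<lambda>n. ln (real n) \<ge> max 1 (3 / (c3 * c1))) at_top" by (rule ln_ev)
      then show ?thesis
      proof eventually_elim
        case (elim n)
        then have a: "ln (real n) \<ge> 1" "ln (real n) \<ge> 3 / (c3 * c1)" by auto
        have "3 / (c3 * c1) * 1 \<le> ln (real n) * ln (real n)"
          using a c1 c3 by (intro mult_mono) auto
        then show ?case using c1 c3 by (simp add: field_simps power2_eq_square)
      qed
    qed
    show ?thesis
      using eventually_ge_at_top[of 3] ln_ev[of 1] lnln_ev[of 1] e3 e4 ln_ev[of "4 * exp 1 / (c1 * c3)"]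
        ev_small c2(2) c1(2) c4(2) c3(2)
      by eventually_elim auto
  qed
  have main: "eventually (\<lambda>n. expected_evals n (lam n) (kk n) \<le> ennreal (Kc c1 c3 C * real n * ln (ln (real n)))) at_top"
    using ev
  proof eventually_elim
    case (elim n)
    define L where "L = lam n"
    define k where "k = kk n"
    have n3: "n \<ge> 3" and lnn: "ln (real n) \<ge> 1" and lln: "ln (ln (real n)) \<ge> 1"
      and e8: "c1 * ln (real n) \<ge> 8" and e3: "c3 * c1 * ln (real n) ^ 2 \<ge> 3"
      and e4e: "ln (real n) \<ge> 4 * exp 1 / (c1 * c3)"
      and esm: "\<bar>ln (real n) ^ 2\<bar> \<le> (exp 1 / (2 * C)) * \<bar>real n\<bar>"
      using elim by auto
    have lnpos: "ln (real n) > 0" using lnn by simp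
    have Lle: "real L \<le> c2 * ln (real n)" using elim lnpos by (simp add: L_def)
    have Lge: "real L \<ge> c1 * ln (real n)" using elim lnpos by (simp add: L_def)
    have kle: "real k \<le> c4 * (real L * ln (real n))" using elim lnpos by (simp add: L_def k_def abs_mult)
    have kge: "real k \<ge> c3 * (real L * ln (real n))" using elim lnpos by (simp add: L_def k_def abs_mult)
    have Ln: "L \<le> n" using lam_range n3 by (simp add: L_def)
    have L8: "L \<ge> 8" using Lge e8 by linarith
    have Lpos: "real L > 0" using L8 by simp
    have hk: "c3 * real L * ln (real n) \<le> real k" using kge by (simp add: mult.assoc)
    have kLL: "real k \<ge> c3 * c1 * ln (real n) ^ 2"
    proof -
      have "c3 * c1 * ln (real n) ^ 2 = c3 * ((c1 * ln (real n)) * ln (real n))" by (simp add: power2_eq_square)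
      also have "\<dots> \<le> c3 * (real L * ln (real n))"
        using Lge lnpos c3 by (intro mult_left_mono mult_right_mono) auto
      finally show ?thesis using kge by linarith
    qed
    have k3: "k \<ge> 3" using kLL e3 by linarith
    have hkC: "real k \<le> C * (ln (real n))\<^sup>2"
    proof -
      have "c4 * (real L * ln (real n)) \<le> c4 * (c2 * ln (real n) * ln (real n))"
        using Lle lnpos c4 by (intro mult_left_mono mult_right_mono) auto
      then show ?thesis using kle by (simp add: C_def power2_eq_square mult_ac)
    qed
    have hk2: "2 * real k \<le> exp 1 * real n"
    proof -
      have "2 * real k \<le> 2 * (C * (ln (real n))\<^sup>2)" using hkC by simp
      also have "\<dots> \<le> 2 * (C * ((exp 1 / (2 * C)) * real n))" using esm Cpos by (intro mult_left_mono) auto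
      also have "\<dots> = exp 1 * real n" using Cpos by (simp add: field_simps)
      finally show ?thesis .
    qed
    have hi0: "exp 1 * real n * ln (real n * real L) / real k + 1 \<le> real n"
    proof -
      have lnnL: "ln (real n * real L) \<le> 2 * ln (real n)"
      proof -
        have "ln (real n * real L) = ln (real n) + ln (real L)" using n3 Lpos by (simp add: ln_mult)
        moreover have "ln (real L) \<le> ln (real n)" using Ln Lpos by simp
        ultimately show ?thesis by simp
      qed
      have kpos: "real k > 0" using k3 by simp
      have "exp 1 * real n * ln (real n * real L) / real k \<le> exp 1 * real n * (2 * ln (real n)) / real k"
        using lnnL kpos n3 by (intro divide_right_mono mult_left_mono) auto
      also have "\<dots> \<le> exp 1 * real n * (2 * ln (real n)) / (c3 * c1 * ln (real n) ^ 2)"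
        using kLL c1(1) c3(1) lnpos n3 kpos by (intro divide_left_mono) auto
      also have "\<dots> = (2 * exp 1 / (c1 * c3 * ln (real n))) * real n"
        using lnpos c1 c3 by (simp add: field_simps power2_eq_square)
      also have "\<dots> \<le> (1 / 2) * real n"
      proof (rule mult_right_mono)
        have "4 * exp 1 \<le> c1 * c3 * ln (real n)" using e4e c1 c3 by (simp add: field_simps)
        then show "2 * exp 1 / (c1 * c3 * ln (real n)) \<le> 1 / 2" using c1 c3 lnpos by (simp add: field_simps)
      qed simp
      finally have "exp 1 * real n * ln (real n * real L) / real k \<le> 1 / 2 * real n" .
      moreover have "real n \<ge> 3" using n3 by simp
      ultimately show ?thesis by linarith
    qed
    have "expected_evals n L k \<le> ennreal (1 + SM n k n + MM n L k n)"
      by (rule expected_bound[OF L8 Ln]) (use k3 in simp)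
    also have "\<dots> \<le> ennreal (Kc c1 c3 C * real n * ln (ln (real n)))"
      by (rule ennreal_leI, rule final_concrete[OF c1(1) c3(1) Cpos L8 Ln k3 lnn lln _ hk hkC hk2 hi0])
         (use Lge in simp)
    finally show ?case by (simp add: L_def k_def)
  qed
  have Kpos: "Kc c1 c3 C > 0"
    unfolding Kc_def using kappa_pos c1 c3 by (intro add_pos_nonneg) auto
  show ?thesis using Kpos main by blast
qed

end
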